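(* Under the standing assumptions below: (1) If $\gamma>0$ and $\omega_0>0$, the normalized stationary solution $w_\infty$ (the Gaussian below) is an equilibrium state, i.e. its current $J_\infty(x):=\int_{\mathbb R^d}(\xi-D_{qq}\nabla_x)w_\infty(x,\xi)\,d\xi$ vanishes for all $x\in\mathbb R^d$. (2) If $\omega_0=0$ or $\gamma=0$ (or both), then there is no stationary solution $w\in L^1(\mathbb R^d_x\times\mathbb R^d_\xi)$ of the harmonic QFP equation with $\iint w\,dx\,d\xi=1$.
   Context: Standing setting (units $\hbar=m=1$, $d\ge1$): the stationary harmonic quantum Fokker–Planck equation $$\xi\cdot\nabla_x w-\omega_0^2 x\cdot\nabla_\xi w=D_{pp}\Delta_\xi w+2\gamma\,\mathrm{div}_\xi(\xi w)+D_{qq}\Delta_x w+2D_{pq}\,\mathrm{div}_x(\nabla_\xi w),$$ with $\omega_0,\gamma\ge0$, $D_{pp}>0$, $D_{qq},D_{pq}\ge0$, $D_{pp}D_{qq}-D_{pq}^2\ge\gamma^2/4$. For $\gamma,\omega_0>0$, $w_\infty(x,\xi)=\frac{\gamma\omega_0}{(2\pi)^d\sqrt Q}\exp\big(-\frac{\gamma}{Q}[Q_{11}\omega_0^2|x|^2+2Q_{12}\omega_0x\cdot\xi+Q_{22}|\xi|^2]\big)$ with $Q_{11}=D_{pp}+\omega_0^2D_{qq}$, $Q_{12}=2\omega_0\gamma D_{qq}$, $Q_{22}=D_{pp}+\omega_0^2D_{qq}+4\gamma(D_{pq}+\gamma D_{qq})$, $Q=Q_{11}Q_{22}-Q_{12}^2$;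 this is the unique stationary solution of mass one. *)

theory Defs
  imports "HOL-Analysis.Analysis"
begin

fun dd :: "'a::euclidean_space list \<Rightarrow> ('a \<Rightarrow> real) \<Rightarrow> 'a \<Rightarrow> real" where
  "dd [] f = f"
| "dd (v # vs) f = (\<lambda>p. frechet_derivative (dd vs f) (at p) v)"

definition Cinf :: "('a::euclidean_space \<Rightarrow> real) \<Rightarrow> bool" where
  "Cinf f \<longleftrightarrow> (\<forall>vs. (dd vs f) differentiable_on UNIV)"

definition test_fun :: "((real^'n) \<times> (real^'n) \<Rightarrow> real) \<Rightarrow> bool" where
  "test_fun \<phi> \<longleftrightarrow> Cinf \<phi> \<and> compact (closure {p. \<phi> p \<noteq> 0})"

definition ex :: "'n::finite \<Rightarrow> (real^'n) \<times> (real^'n)" where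
  "ex j = (axis j 1, 0)"

definition exi :: "'n::finite \<Rightarrow> (real^'n) \<times> (real^'n)" where
  "exi j = (0, axis j 1)"

text \<open>Formal adjoint of the stationary harmonic QFP operator applied to a test function,
  so that w is a distributional stationary solution iff the integral of w times this vanishes
  for every test function.\<close>
definition QFP_adj ::
  "real \<Rightarrow> real \<Rightarrow> real \<Rightarrow> real \<Rightarrow> real \<Rightarrow>
   ((real^'n::finite) \<times> (real^'n) \<Rightarrow> real) \<Rightarrow> (real^'n) \<times> (real^'n) \<Rightarrow> real" where
  "QFP_adj \<omega>0 \<gamma> Dpp Dqq Dpq \<phi> p =
     (let x = fst p; \<xi> = snd p in
       - (\<Sum>j\<in>UNIV. (\<xi> $ j) * dd [ex j] \<phi> p)
       + \<omega>0\<^sup>2 * (\<Sum>j\<in>UNIV. (x $ j) * dd [exi j] \<phi> p)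
       - Dpp * (\<Sum>j\<in>UNIV. dd [exi j, exi j] \<phi> p)
       + 2 * \<gamma> * (\<Sum>j\<in>UNIV. (\<xi> $ j) * dd [exi j] \<phi> p)
       - Dqq * (\<Sum>j\<in>UNIV. dd [ex j, ex j] \<phi> p)
       - 2 * Dpq * (\<Sum>j\<in>UNIV. dd [ex j, exi j] \<phi> p))"

definition stationary_QFP ::
  "real \<Rightarrow> real \<Rightarrow> real \<Rightarrow> real \<Rightarrow> real \<Rightarrow>
   ((real^'n::finite) \<times> (real^'n) \<Rightarrow> real) \<Rightarrow> bool" where
  "stationary_QFP \<omega>0 \<gamma> Dpp Dqq Dpq w \<longleftrightarrow>
     (\<forall>\<phi>. test_fun \<phi> \<longrightarrow>
        (\<integral>p. w p * QFP_adj \<omega>0 \<gamma> Dpp Dqq Dpq \<phi> p \<partial>lebesgue) = 0)"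

definition w_inf ::
  "real \<Rightarrow> real \<Rightarrow> real \<Rightarrow> real \<Rightarrow> real \<Rightarrow> real^'n::finite \<Rightarrow> real^'n \<Rightarrow> real" where
  "w_inf \<omega>0 \<gamma> Dpp Dqq Dpq x \<xi> =
     (let Q11 = Dpp + \<omega>0\<^sup>2 * Dqq;
          Q12 = 2 * \<omega>0 * \<gamma> * Dqq;
          Q22 = Dpp + \<omega>0\<^sup>2 * Dqq + 4 * \<gamma> * (Dpq + \<gamma> * Dqq);
          Q = Q11 * Q22 - Q12\<^sup>2
      in \<gamma> * \<omega>0 / ((2 * pi) ^ CARD('n) * sqrt Q) *
         exp (- (\<gamma> / Q) * (Q11 * \<omega>0\<^sup>2 * (norm x)\<^sup>2 + 2 * Q12 * \<omega>0 * (x \<bullet> \<xi>)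
                             + Q22 * (norm \<xi>)\<^sup>2)))"

definition grad_x :: "(real^'n::finite \<Rightarrow> real^'n \<Rightarrow> real) \<Rightarrow> real^'n \<Rightarrow> real^'n \<Rightarrow> real^'n" where
  "grad_x w x \<xi> = (\<chi> j. frechet_derivative (\<lambda>y. w y \<xi>) (at x) (axis j 1))"

definition current :: "real \<Rightarrow> (real^'n::finite \<Rightarrow> real^'n \<Rightarrow> real) \<Rightarrow> real^'n \<Rightarrow> real^'n" where
  "current Dqq w x = (\<integral>\<xi>. (w x \<xi> *\<^sub>R \<xi> - Dqq *\<^sub>R grad_x w x \<xi>) \<partial>lborel)"

end

theory Submission
  imports Defs "HOL-Probability.Distributions"
begin

lemma gauss1_integrable:
  fixes \<alpha> :: real assumes "\<alpha> > 0"
  shows "integrable lborel (\<lambda>t::real. exp (- \<alpha> * t\<^sup>2))"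
proof -
  define \<sigma> where "\<sigma> = sqrt (1 / (2 * \<alpha>))"
  have s2: "2 * \<sigma>\<^sup>2 = 1 / \<alpha>" using assms by (simp add: \<sigma>_def)
  have "integrable lborel (\<lambda>t. sqrt (2 * pi * \<sigma>\<^sup>2) * normal_density 0 \<sigma> t)" using assms by (intro integrable_mult_right integrable_normal_density) (simp add: \<sigma>_def)
  moreover have "(\<lambda>t. sqrt (2 * pi * \<sigma>\<^sup>2) * normal_density 0 \<sigma> t) = (\<lambda>t::real. exp (- \<alpha> * t\<^sup>2))"
    using assms s2 by (auto simp: normal_density_def \<sigma>_def field_simps)
  ultimately show ?thesis by simp
qed

lemma gauss_integrable:
  fixes \<alpha> :: real assumes "\<alpha> > 0"
  shows "integrable lborel (\<lambda>x::'a::euclidean_space. exp (- \<alpha> * (norm x)\<^sup>2))"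
proof (unfold integrable_iff_bounded, intro conjI)
  show "(\<lambda>x::'a. exp (- \<alpha> * (norm x)\<^sup>2)) \<in> borel_measurable lborel" by measurable
  have eq: "exp (- \<alpha> * (norm x)\<^sup>2) = (\<Prod>b\<in>Basis. exp (- \<alpha> * (x \<bullet> b)\<^sup>2))" for x :: 'a
  proof -
    have "(norm x)\<^sup>2 = (\<Sum>b\<in>Basis. (x \<bullet> b)\<^sup>2)"
      unfolding power2_norm_eq_inner by (subst euclidean_inner) (simp add: power2_eq_square)
    then show ?thesis by (simp add: sum_distrib_left exp_sum)
  qed
  have "(\<integral>\<^sup>+x. ennreal (norm (exp (- \<alpha> * (norm (x::'a))\<^sup>2))) \<partial>lborel)
      = (\<integral>\<^sup>+x. (\<Prod>b\<in>Basis. ennreal (exp (- \<alpha> * ((x::'a) \<bullet> b)\<^sup>2))) \<partial>lborel)"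
    by (rule nn_integral_cong, subst eq, subst prod_ennreal) (auto simp: prod_nonneg)
  also have "\<dots> = (\<Prod>b\<in>(Basis::'a set). (\<integral>\<^sup>+t. ennreal (exp (- \<alpha> * t\<^sup>2)) \<partial>lborel))"
    by (rule nn_integral_lborel_prod) auto
  also have "\<dots> < \<infinity>"
  proof -
    have "(\<integral>\<^sup>+t. ennreal (exp (- \<alpha> * t\<^sup>2)) \<partial>lborel) < \<infinity>"
      using gauss1_integrable[OF assms] by (simp add: integrable_iff_bounded)
    then show ?thesis by (simp add: less_top[symmetric] power_eq_top_ennreal)
  qed
  finally show "(\<integral>\<^sup>+x. ennreal (norm (exp (- \<alpha> * (norm (x::'a))\<^sup>2))) \<partial>lborel) < \<infinity>" .
qed

lemma lborel_distr_affine1: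
  fixes t :: "'a::euclidean_space"
  assumes "\<bar>c\<bar> = 1"
  shows "distr lborel borel (\<lambda>x. t + c *\<^sub>R x) = (lborel :: 'a measure)"
proof -
  have "c \<noteq> 0" using assms by auto
  from lborel_affine[OF this, of t] assms show ?thesis by (simp add: density_1)
qed

lemma lborel_integral_affine1:
  fixes f :: "'a::euclidean_space \<Rightarrow> 'b::{banach, second_countable_topology}"
  assumes "\<bar>c\<bar> = 1" and [measurable]: "f \<in> borel_measurable borel"
  shows "(\<integral>x. f (t + c *\<^sub>R x) \<partial>lborel) = (\<integral>x. f x \<partial>lborel)"
    and "integrable lborel (\<lambda>x. f (t + c *\<^sub>R x)) \<longleftrightarrow> integrable lborel f"
proof -
  have T[measurable]: "(\<lambda>x::'a. t + c *\<^sub>R x) \<in> borel \<rightarrow>\<^sub>M borel" by measurable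
  have "(\<integral>x. f x \<partial>lborel) = (\<integral>x. f x \<partial>(distr lborel borel (\<lambda>x::'a. t + c *\<^sub>R x)))"
    by (subst lborel_distr_affine1[OF assms(1)]) (rule refl)
  also have "\<dots> = (\<integral>x. f (t + c *\<^sub>R x) \<partial>lborel)"
    by (rule integral_distr) measurable
  finally show "(\<integral>x. f (t + c *\<^sub>R x) \<partial>lborel) = (\<integral>x. f x \<partial>lborel)" by simp
  have "integrable lborel f \<longleftrightarrow> integrable (distr lborel borel (\<lambda>x::'a. t + c *\<^sub>R x)) f"
    by (subst lborel_distr_affine1[OF assms(1)]) (rule refl)
  also have "\<dots> \<longleftrightarrow> integrable lborel (\<lambda>x. f (t + c *\<^sub>R x))"
    by (rule integrable_distr_eq) measurable
  finally show "integrable lborel (\<lambda>x. f (t + c *\<^sub>R x)) \<longleftrightarrow> integrable lborel f" by simp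
qed

lemma odd_gauss:
  fixes \<beta> :: real assumes b: "\<beta> > 0"
  shows "integrable lborel (\<lambda>\<eta>::'a::euclidean_space. exp (- \<beta> * (norm \<eta>)\<^sup>2) *\<^sub>R \<eta>)"
    and "(\<integral>\<eta>. exp (- \<beta> * (norm \<eta>)\<^sup>2) *\<^sub>R (\<eta>::'a) \<partial>lborel) = 0"
proof -
  let ?g = "\<lambda>\<eta>::'a. exp (- \<beta> * (norm \<eta>)\<^sup>2) *\<^sub>R \<eta>"
  have bnd: "norm (?g \<eta>) \<le> norm ((1 + 2 / \<beta>) * exp (- (\<beta>/2) * (norm \<eta>)\<^sup>2))" for \<eta>
  proof -
    define s where "s = norm \<eta>"
    have s0: "s \<ge> 0" by (simp add: s_def)
    have e: "exp (- \<beta> * s\<^sup>2) = exp (- (\<beta>/2) * s\<^sup>2) * exp (- (\<beta>/2) * s\<^sup>2)"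
      by (simp flip: exp_add)
    have y: "(\<beta>/2 * s\<^sup>2) * exp (- (\<beta>/2) * s\<^sup>2) \<le> 1"
    proof -
      have "\<beta>/2 * s\<^sup>2 \<le> exp (\<beta>/2 * s\<^sup>2)" using exp_ge_add_one_self[of "\<beta>/2 * s\<^sup>2"] by linarith
      then show ?thesis by (simp add: exp_minus field_simps)
    qed
    have "0 \<le> (s - 1)\<^sup>2" by simp
    then have "0 \<le> s\<^sup>2 + 1 - 2 * s" by (simp add: power2_diff)
    then have "s \<le> 1 + s\<^sup>2" using s0 by linarith
    then have "s * exp (- (\<beta>/2) * s\<^sup>2) \<le> (1 + s\<^sup>2) * exp (- (\<beta>/2) * s\<^sup>2)"
      by (intro mult_right_mono) auto
    also have "\<dots> = exp (- (\<beta>/2) * s\<^sup>2) + (2/\<beta>) * ((\<beta>/2 * s\<^sup>2) * exp (- (\<beta>/2) * s\<^sup>2))"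
      using b by (simp add: field_simps)
    also have "\<dots> \<le> 1 + 2/\<beta>"
    proof (rule add_mono)
      show "exp (- (\<beta>/2) * s\<^sup>2) \<le> 1" using b by simp
      have "(2/\<beta>) * ((\<beta>/2 * s\<^sup>2) * exp (- (\<beta>/2) * s\<^sup>2)) \<le> (2/\<beta>) * 1"
        by (rule mult_left_mono[OF y]) (use b in simp)
      then show "(2/\<beta>) * ((\<beta>/2 * s\<^sup>2) * exp (- (\<beta>/2) * s\<^sup>2)) \<le> 2/\<beta>" by simp
    qed
    finally have "s * exp (- (\<beta>/2) * s\<^sup>2) \<le> 1 + 2/\<beta>" .
    then have "s * exp (- \<beta> * s\<^sup>2) \<le> (1 + 2/\<beta>) * exp (- (\<beta>/2) * s\<^sup>2)"
      unfolding e by (metis exp_gt_zero mult.assoc mult_right_mono less_eq_real_def mult.commute)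
    then show ?thesis using b by (simp add: s_def mult.commute)
  qed
  show int: "integrable lborel ?g"
    by (rule Bochner_Integration.integrable_bound[where f="\<lambda>\<eta>. (1 + 2 / \<beta>) * exp (- (\<beta>/2) * (norm \<eta>)\<^sup>2)"])
       (use b gauss_integrable[of "\<beta>/2"] bnd in auto)
  have "(\<integral>\<eta>. ?g \<eta> \<partial>lborel) = (\<integral>\<eta>. ?g (0 + (-1) *\<^sub>R \<eta>) \<partial>lborel)"
    by (rule lborel_integral_affine1(1)[symmetric]) auto
  also have "(\<lambda>\<eta>. ?g (0 + (-1) *\<^sub>R \<eta>)) = (\<lambda>\<eta>. - ?g \<eta>)" by auto
  also have "(\<integral>\<eta>. - ?g \<eta> \<partial>lborel) = - (\<integral>\<eta>. ?g \<eta> \<partial>lborel)"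
    by (rule integral_minus)
  finally have h: "(\<integral>\<eta>. ?g \<eta> \<partial>lborel) = - (\<integral>\<eta>. ?g \<eta> \<partial>lborel)" .
  have "(\<integral>\<eta>. ?g \<eta> \<partial>lborel) + (\<integral>\<eta>. ?g \<eta> \<partial>lborel) = 0"
    by (subst (2) h) (rule right_minus)
  then have "(2::real) *\<^sub>R (\<integral>\<eta>. ?g \<eta> \<partial>lborel) = 0" by (simp add: scaleR_2)
  then show "(\<integral>\<eta>. ?g \<eta> \<partial>lborel) = 0" by simp
qed

lemma part1:
  fixes \<omega>0 \<gamma> Dpp Dqq Dpq :: real and x :: "real^'n::finite"
  assumes g: "\<gamma> > 0" and o: "\<omega>0 > 0" and p: "Dpp > 0" and q: "Dqq \<ge> 0" and pq: "Dpq \<ge> 0"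
  shows "integrable lborel (\<lambda>\<xi>. w_inf \<omega>0 \<gamma> Dpp Dqq Dpq x \<xi> *\<^sub>R \<xi>
                                     - Dqq *\<^sub>R grad_x (w_inf \<omega>0 \<gamma> Dpp Dqq Dpq) x \<xi>)
         \<and> current Dqq (w_inf \<omega>0 \<gamma> Dpp Dqq Dpq) x = 0"
proof -
  define Q11 where "Q11 = Dpp + \<omega>0\<^sup>2 * Dqq"
  define Q12 where "Q12 = 2 * \<omega>0 * \<gamma> * Dqq"
  define Q22 where "Q22 = Dpp + \<omega>0\<^sup>2 * Dqq + 4 * \<gamma> * (Dpq + \<gamma> * Dqq)"
  define Q where "Q = Q11 * Q22 - Q12\<^sup>2"
  define a where "a = Q11 * \<omega>0\<^sup>2"
  define b where "b = Q12 * \<omega>0"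
  define c where "c = Q22"
  define \<kappa> where "\<kappa> = \<gamma> / Q"
  define C0 where "C0 = \<gamma> * \<omega>0 / ((2 * pi) ^ CARD('n) * sqrt Q)"
  define W :: "real^'n \<Rightarrow> real^'n \<Rightarrow> real" where "W = w_inf \<omega>0 \<gamma> Dpp Dqq Dpq"
  have Q11p: "Q11 > 0" using p q by (simp add: Q11_def add_pos_nonneg)
  have Qid: "Q = Q11\<^sup>2 + 4 * \<gamma> * Q11 * Dpq + 4 * \<gamma>\<^sup>2 * Dpp * Dqq"
    unfolding Q_def Q11_def Q12_def Q22_def by (simp add: power2_eq_square algebra_simps)
  have Qp: "Q > 0" unfolding Qid using Q11p g p q pq
    by (intro add_pos_nonneg) (auto intro!: mult_nonneg_nonneg)
  have cp: "c > 0" unfolding c_def Q22_def using p q g pq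
    by (intro add_pos_nonneg) (auto intro!: mult_nonneg_nonneg)
  have Wdef: "W y \<xi> = C0 * exp (- \<kappa> * (a * (y \<bullet> y) + 2 * b * (y \<bullet> \<xi>) + c * (\<xi> \<bullet> \<xi>)))" for y \<xi> :: "real^'n"
    unfolding W_def w_inf_def Let_def C0_def \<kappa>_def a_def b_def c_def Q_def Q11_def Q12_def Q22_def
    by (simp add: power2_norm_eq_inner mult.assoc)
  have hd: "((\<lambda>y. W y \<xi>) has_derivative (\<lambda>v. W x \<xi> * (- \<kappa> * (2 * a * (x \<bullet> v) + 2 * b * (v \<bullet> \<xi>))))) (at x)" for \<xi>
    unfolding Wdef
    by (auto intro!: derivative_eq_intros ext simp: algebra_simps inner_commute)
  have grad: "grad_x W x \<xi> = (- \<kappa> * W x \<xi>) *\<^sub>R (2 * a) *\<^sub>R x + (- \<kappa> * W x \<xi>) *\<^sub>R (2 * b) *\<^sub>R \<xi>" for \<xi>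
    unfolding grad_x_def frechet_derivative_at[OF hd, symmetric]
    by (simp add: vec_eq_iff inner_axis inner_commute algebra_simps)
  define m where "m = (b / c) *\<^sub>R x"
  define \<beta> where "\<beta> = \<kappa> * c"
  define lam where "lam = 1 + 2 * Dqq * \<kappa> * b"
  define K where "K = C0 * exp (- \<kappa> * (a - b\<^sup>2 / c) * (x \<bullet> x)) * lam"
  have \<beta>p: "\<beta> > 0" using Qp cp g by (simp add: \<beta>_def \<kappa>_def)
  have ring: "(Q + 2 * Dqq * \<gamma> * b) * b = 2 * Dqq * \<gamma> * a * c"
    unfolding Q_def Q11_def Q12_def Q22_def a_def b_def c_def by (simp add: power2_eq_square algebra_simps)
  have E2: "lam * (b / c) = 2 * Dqq * \<kappa> * a"
    using ring Qp cp unfolding lam_def \<kappa>_def by (simp add: field_simps)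
  have E1: "K * exp (- \<beta> * (norm (\<xi> + m))\<^sup>2) = lam * W x \<xi>" for \<xi>
  proof -
    have "- \<kappa> * (a - b\<^sup>2 / c) * (x \<bullet> x) + - \<beta> * (norm (\<xi> + m))\<^sup>2
          = - \<kappa> * (a * (x \<bullet> x) + 2 * b * (x \<bullet> \<xi>) + c * (\<xi> \<bullet> \<xi>))"
      using cp unfolding power2_norm_eq_inner m_def \<beta>_def
      by (simp add: inner_add_left inner_add_right inner_commute field_simps power2_eq_square)
    then show ?thesis unfolding K_def Wdef by (simp flip: exp_add)
  qed
  have integrand: "W x \<xi> *\<^sub>R \<xi> - Dqq *\<^sub>R grad_x W x \<xi> = K *\<^sub>R (exp (- \<beta> * (norm (\<xi> + m))\<^sup>2) *\<^sub>R (\<xi> + m))" for \<xi>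
  proof -
    have "W x \<xi> *\<^sub>R \<xi> - Dqq *\<^sub>R grad_x W x \<xi> = W x \<xi> *\<^sub>R (lam *\<^sub>R \<xi> + (2 * Dqq * \<kappa> * a) *\<^sub>R x)"
      unfolding grad lam_def by (simp add: algebra_simps)
    also have "\<dots> = (lam * W x \<xi>) *\<^sub>R (\<xi> + m)"
      unfolding m_def E2[symmetric] by (simp add: algebra_simps)
    also have "\<dots> = K *\<^sub>R (exp (- \<beta> * (norm (\<xi> + m))\<^sup>2) *\<^sub>R (\<xi> + m))"
      by (simp add: E1[symmetric])
    finally show ?thesis .
  qed
  let ?g = "\<lambda>\<eta>::real^'n. exp (- \<beta> * (norm \<eta>)\<^sup>2) *\<^sub>R \<eta>"
  have gm[measurable]: "?g \<in> borel_measurable borel" by measurable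
  have ig: "integrable lborel (\<lambda>\<xi>. ?g (m + 1 *\<^sub>R \<xi>))"
    using odd_gauss(1)[OF \<beta>p] lborel_integral_affine1(2)[of 1 ?g m] by simp
  have i0: "(\<integral>\<xi>. ?g (m + 1 *\<^sub>R \<xi>) \<partial>lborel) = 0"
    using odd_gauss(2)[OF \<beta>p] lborel_integral_affine1(1)[of 1 ?g m] by simp
  have feq: "(\<lambda>\<xi>. W x \<xi> *\<^sub>R \<xi> - Dqq *\<^sub>R grad_x W x \<xi>) = (\<lambda>\<xi>. K *\<^sub>R ?g (m + 1 *\<^sub>R \<xi>))"
    by (rule ext) (simp add: integrand add.commute)
  have A: "integrable lborel (\<lambda>\<xi>. K *\<^sub>R ?g (m + 1 *\<^sub>R \<xi>))"
    by (rule integrable_scaleR_right[OF ig])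
  have B: "(\<integral>\<xi>. K *\<^sub>R ?g (m + 1 *\<^sub>R \<xi>) \<partial>lborel) = 0"
    by (simp only: integral_scaleR_right i0 scaleR_zero_right)
  show ?thesis
    unfolding W_def[symmetric] current_def feq
    using A B by (intro conjI)
qed

definition smooth_fam :: "(real \<Rightarrow> real) set \<Rightarrow> bool" where
  "smooth_fam A \<longleftrightarrow> (\<forall>a\<in>A. \<exists>a'\<in>A. \<forall>t. (a has_real_derivative a' t) (at t))"

inductive_set Cls :: "(real \<Rightarrow> real) set \<Rightarrow> ('a::euclidean_space \<Rightarrow> real) set" for A where
  cst: "(\<lambda>p. c) \<in> Cls A"
| lin: "bounded_linear f \<Longrightarrow> f \<in> Cls A"
| bil: "bounded_linear (l1 :: 'a \<Rightarrow> 'a) \<Longrightarrow> bounded_linear (l2 :: 'a \<Rightarrow> 'a) \<Longrightarrow> (\<lambda>p. inner (l1 p) (l2 p)) \<in> Cls A"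
| add: "f \<in> Cls A \<Longrightarrow> g \<in> Cls A \<Longrightarrow> (\<lambda>p. f p + g p) \<in> Cls A"
| mul: "f \<in> Cls A \<Longrightarrow> g \<in> Cls A \<Longrightarrow> (\<lambda>p. f p * g p) \<in> Cls A"
| cmp: "a \<in> A \<Longrightarrow> f \<in> Cls A \<Longrightarrow> (\<lambda>p. a (f p)) \<in> Cls A"
| inv: "f \<in> Cls A \<Longrightarrow> (\<And>p. f p \<noteq> 0) \<Longrightarrow> (\<lambda>p. inverse (f p)) \<in> Cls A"

lemma hd_comp_real:
  assumes "(G has_real_derivative G') (at (f x))" and "(f has_derivative f') (at x)"
  shows "((\<lambda>y. G (f y)) has_derivative (\<lambda>v. G' * f' v)) (at x)"
  using has_derivative_compose[OF assms(2) assms(1)[unfolded has_field_derivative_def]] by simp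

lemma Cls_deriv:
  assumes A: "smooth_fam A" and f: "f \<in> Cls A"
  shows "\<exists>D. (\<forall>p. (f has_derivative D p) (at p)) \<and> (\<forall>v. (\<lambda>p. D p v) \<in> Cls A)"
  using f
proof induction
  case (cst c)
  show ?case by (rule exI[of _ "\<lambda>p v. 0"]) (auto intro: Cls.cst)
next
  case (lin f)
  show ?case
    by (rule exI[of _ "\<lambda>p. f"]) (auto intro: Cls.cst bounded_linear_imp_has_derivative[OF lin])
next
  case (bil l1 l2)
  show ?case
  proof (rule exI[of _ "\<lambda>p v. inner (l1 p) (l2 v) + inner (l1 v) (l2 p)"], intro conjI allI)
    fix p
    show "((\<lambda>p. inner (l1 p) (l2 p)) has_derivative (\<lambda>v. inner (l1 p) (l2 v) + inner (l1 v) (l2 p))) (at p)"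
      using has_derivative_inner[OF bounded_linear_imp_has_derivative[OF bil(1)] bounded_linear_imp_has_derivative[OF bil(2)]]
      by simp
  next
    fix v
    have b1: "bounded_linear (\<lambda>p. inner (l1 p) (l2 v))"
      by (rule bounded_linear_compose[OF bounded_linear_inner_left bil(1)])
    have b2: "bounded_linear (\<lambda>p. inner (l1 v) (l2 p))"
      by (rule bounded_linear_compose[OF bounded_linear_inner_right bil(2)])
    show "(\<lambda>p. inner (l1 p) (l2 v) + inner (l1 v) (l2 p)) \<in> Cls A"
      by (rule Cls.add[OF Cls.lin[OF b1] Cls.lin[OF b2]])
  qed
next
  case (add f g)
  from add.IH obtain Df Dg where f: "\<forall>p. (f has_derivative Df p) (at p)" "\<forall>v. (\<lambda>p. Df p v) \<in> Cls A"
    and g: "\<forall>p. (g has_derivative Dg p) (at p)" "\<forall>v. (\<lambda>p. Dg p v) \<in> Cls A" by blast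
  show ?case
    by (rule exI[of _ "\<lambda>p v. Df p v + Dg p v"], intro conjI allI has_derivative_add[OF f(1)[rule_format] g(1)[rule_format]]
          Cls.add[OF f(2)[rule_format] g(2)[rule_format]])
next
  case (mul f g)
  from mul.IH obtain Df Dg where f: "\<forall>p. (f has_derivative Df p) (at p)" "\<forall>v. (\<lambda>p. Df p v) \<in> Cls A"
    and g: "\<forall>p. (g has_derivative Dg p) (at p)" "\<forall>v. (\<lambda>p. Dg p v) \<in> Cls A" by blast
  show ?case
  proof (rule exI[of _ "\<lambda>p v. f p * Dg p v + Df p v * g p"], intro conjI allI)
    fix p show "((\<lambda>p. f p * g p) has_derivative (\<lambda>v. f p * Dg p v + Df p v * g p)) (at p)"
      by (rule has_derivative_mult[OF f(1)[rule_format] g(1)[rule_format]])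
  next
    fix v show "(\<lambda>p. f p * Dg p v + Df p v * g p) \<in> Cls A"
      by (rule Cls.add[OF Cls.mul[OF mul.hyps(1) g(2)[rule_format]] Cls.mul[OF f(2)[rule_format] mul.hyps(2)]])
  qed
next
  case (cmp a f)
  from cmp.IH obtain Df where f: "\<forall>p. (f has_derivative Df p) (at p)" "\<forall>v. (\<lambda>p. Df p v) \<in> Cls A" by blast
  from A cmp.hyps(1) obtain a' where a': "a' \<in> A" "\<And>t. (a has_real_derivative a' t) (at t)"
    unfolding smooth_fam_def by blast
  show ?case
  proof (rule exI[of _ "\<lambda>p v. a' (f p) * Df p v"], intro conjI allI)
    fix p show "((\<lambda>p. a (f p)) has_derivative (\<lambda>v. a' (f p) * Df p v)) (at p)"
      by (rule hd_comp_real[OF a'(2) f(1)[rule_format]])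
  next
    fix v show "(\<lambda>p. a' (f p) * Df p v) \<in> Cls A"
      by (rule Cls.mul[OF Cls.cmp[OF a'(1) cmp.hyps(2)] f(2)[rule_format]])
  qed
next
  case (inv f)
  from inv.IH obtain Df where f: "\<forall>p. (f has_derivative Df p) (at p)" "\<forall>v. (\<lambda>p. Df p v) \<in> Cls A" by blast
  show ?case
  proof (rule exI[of _ "\<lambda>p v. - (inverse (f p) * Df p v * inverse (f p))"], intro conjI allI)
    fix p show "((\<lambda>p. inverse (f p)) has_derivative (\<lambda>v. - (inverse (f p) * Df p v * inverse (f p)))) (at p)"
      by (rule Deriv.has_derivative_inverse[OF inv.hyps(2) f(1)[rule_format]])
  next
    fix v
    have "(\<lambda>p. (-1) * (inverse (f p) * Df p v * inverse (f p))) \<in> Cls A"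
      by (rule Cls.mul[OF Cls.cst Cls.mul[OF Cls.mul[OF Cls.inv[OF inv.hyps] f(2)[rule_format]] Cls.inv[OF inv.hyps]]])
    then show "(\<lambda>p. - (inverse (f p) * Df p v * inverse (f p))) \<in> Cls A" by simp
  qed
qed

lemma Cls_dd:
  assumes A: "smooth_fam A" and f: "f \<in> Cls A"
  shows "dd vs f \<in> Cls A"
proof (induction vs)
  case Nil then show ?case using f by simp
next
  case (Cons v vs)
  from Cls_deriv[OF A Cons.IH] obtain D where
    D: "\<forall>p. (dd vs f has_derivative D p) (at p)" "\<forall>v. (\<lambda>p. D p v) \<in> Cls A" by blast
  have "frechet_derivative (dd vs f) (at p) = D p" for p
    using D(1) frechet_derivative_at by metis
  then have "dd (v # vs) f = (\<lambda>p. D p v)" by simp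
  then show ?case using D(2) by simp
qed

lemma Cls_Cinf:
  assumes A: "smooth_fam A" and f: "f \<in> Cls A"
  shows "Cinf f"
  unfolding Cinf_def
proof
  fix vs
  from Cls_deriv[OF A Cls_dd[OF A f, of vs]] obtain D where
    D: "\<forall>p. (dd vs f has_derivative D p) (at p)" by blast
  then show "dd vs f differentiable_on UNIV"
    unfolding differentiable_on_def differentiable_def by blast
qed

lemma smooth_fam_Cls:
  assumes A: "smooth_fam A"
  shows "smooth_fam (Cls A :: (real \<Rightarrow> real) set)"
  unfolding smooth_fam_def
proof
  fix a :: "real \<Rightarrow> real" assume a: "a \<in> Cls A"
  from Cls_deriv[OF A a] obtain D where
    D: "\<forall>p. (a has_derivative D p) (at p)" "\<forall>v. (\<lambda>p. D p v) \<in> Cls A" by blast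
  have "(a has_real_derivative D t 1) (at t)" for t
  proof -
    have bl: "bounded_linear (D t)" using D(1) has_derivative_bounded_linear by blast
    have "D t = (\<lambda>h. D t 1 * h)"
    proof
      fix h
      have "D t (h *\<^sub>R 1) = h *\<^sub>R D t 1" by (rule linear_scale[OF bounded_linear.linear[OF bl]])
      then show "D t h = D t 1 * h" by simp
    qed
    then show ?thesis using D(1) unfolding has_field_derivative_def by metis
  qed
  then show "\<exists>a'\<in>Cls A. \<forall>t. (a has_real_derivative a' t) (at t)"
    using D(2) by (intro bexI[of _ "\<lambda>t. D t 1"]) auto
qed

inductive_set polys :: "(real \<Rightarrow> real) set" where
  pc: "(\<lambda>s. c) \<in> polys"
| ps: "q \<in> polys \<Longrightarrow> (\<lambda>s. s * q s) \<in> polys"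
| pa: "q1 \<in> polys \<Longrightarrow> q2 \<in> polys \<Longrightarrow> (\<lambda>s. q1 s + q2 s) \<in> polys"
| pm: "q \<in> polys \<Longrightarrow> (\<lambda>s. c * q s) \<in> polys"

lemma polys_deriv: "q \<in> polys \<Longrightarrow> \<exists>q'\<in>polys. \<forall>s. (q has_real_derivative q' s) (at s)"
proof (induction rule: polys.induct)
  case (pc c) show ?case by (rule bexI[of _ "\<lambda>s. 0"]) (auto intro: polys.pc)
next
  case (ps q)
  then obtain q' where q': "q' \<in> polys" "\<And>s. (q has_real_derivative q' s) (at s)" by blast
  have "((\<lambda>s. s * q s) has_real_derivative q s + s * q' s) (at s)" for s
    using DERIV_mult'[OF DERIV_ident q'(2)] by (simp add: add.commute)
  moreover have "(\<lambda>s. q s + s * q' s) \<in> polys" by (rule polys.pa[OF ps.hyps polys.ps[OF q'(1)]])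
  ultimately show ?case by (intro bexI[of _ "\<lambda>s. q s + s * q' s"]) auto
next
  case (pa q1 q2)
  then obtain q1' q2' where q: "q1' \<in> polys" "\<And>s. (q1 has_real_derivative q1' s) (at s)"
    "q2' \<in> polys" "\<And>s. (q2 has_real_derivative q2' s) (at s)" by blast
  have "((\<lambda>s. q1 s + q2 s) has_real_derivative q1' s + q2' s) (at s)" for s
    by (rule DERIV_add[OF q(2) q(4)])
  moreover have "(\<lambda>s. q1' s + q2' s) \<in> polys" by (rule polys.pa[OF q(1) q(3)])
  ultimately show ?case by (intro bexI[of _ "\<lambda>s. q1' s + q2' s"]) auto
next
  case (pm q c)
  then obtain q' where q': "q' \<in> polys" "\<And>s. (q has_real_derivative q' s) (at s)" by blast
  have "((\<lambda>s. c * q s) has_real_derivative c * q' s) (at s)" for s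
    by (rule DERIV_cmult[OF q'(2)])
  moreover have "(\<lambda>s. c * q' s) \<in> polys" by (rule polys.pm[OF q'(1)])
  ultimately show ?case by (intro bexI[of _ "\<lambda>s. c * q' s"]) auto
qed

lemma polys_lim: "q \<in> polys \<Longrightarrow> ((\<lambda>s. q s * s ^ m * exp (- s)) \<longlongrightarrow> 0) at_top"
proof (induction arbitrary: m rule: polys.induct)
  case (pc c)
  have "((\<lambda>s::real. c * (s ^ m / exp s)) \<longlongrightarrow> c * 0) at_top"
    by (intro tendsto_mult tendsto_const tendsto_power_div_exp_0)
  then show ?case by (simp add: exp_minus divide_inverse mult.assoc)
next
  case (ps q)
  have "((\<lambda>s. q s * s ^ Suc m * exp (- s)) \<longlongrightarrow> 0) at_top" by (rule ps.IH)
  then show ?case by (simp add: mult_ac)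
next
  case (pa q1 q2)
  have "((\<lambda>s. q1 s * s ^ m * exp (- s) + q2 s * s ^ m * exp (- s)) \<longlongrightarrow> 0 + 0) at_top"
    by (intro tendsto_add pa.IH)
  then show ?case by (simp add: algebra_simps)
next
  case (pm q c)
  have "((\<lambda>s. c * (q s * s ^ m * exp (- s))) \<longlongrightarrow> c * 0) at_top"
    by (intro tendsto_mult tendsto_const pm.IH)
  then show ?case by (simp add: mult_ac)
qed

definition fP :: "(real \<Rightarrow> real) \<Rightarrow> real \<Rightarrow> real" where
  "fP q t = (if t > 0 then q (1/t) * exp (- (1/t)) else 0)"

lemma fP_deriv:
  assumes q: "q \<in> polys" and q': "\<And>s. (q has_real_derivative q' s) (at s)"
  shows "(fP q has_real_derivative fP (\<lambda>s. s * (s * (q s + (-1) * q' s))) t) (at t)"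
proof -
  consider "t > 0" | "t < 0" | "t = 0" by linarith
  then show ?thesis
  proof cases
    case 1
    have d1: "((\<lambda>t. 1/t) has_real_derivative - (1 / t\<^sup>2)) (at t)"
      using 1 by (auto intro!: derivative_eq_intros simp: power2_eq_square)
    have d2: "((\<lambda>t. q (1/t)) has_real_derivative q' (1/t) * (- (1 / t\<^sup>2))) (at t)"
      by (rule DERIV_chain2[OF q' d1])
    have d3: "((\<lambda>t. exp (- (1/t))) has_real_derivative exp (- (1/t)) * (1 / t\<^sup>2)) (at t)"
      using DERIV_chain2[OF DERIV_exp DERIV_minus[OF d1]] by simp
    have d: "((\<lambda>t. q (1/t) * exp (- (1/t))) has_real_derivative
              q (1/t) * (exp (- (1/t)) * (1 / t\<^sup>2)) + q' (1/t) * (- (1 / t\<^sup>2)) * exp (- (1/t))) (at t)"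
      by (rule DERIV_mult'[OF d2 d3])
    have eq: "q (1/t) * (exp (- (1/t)) * (1 / t\<^sup>2)) + q' (1/t) * (- (1 / t\<^sup>2)) * exp (- (1/t))
            = fP (\<lambda>s. s * (s * (q s + (-1) * q' s))) t"
      using 1 by (simp add: fP_def power2_eq_square algebra_simps)
    show ?thesis
      by (rule has_field_derivative_transform_within_open[OF d[unfolded eq], of "{0<..}"])
         (use 1 in \<open>auto simp: fP_def\<close>)
  next
    case 2
    have "((\<lambda>t. 0) has_real_derivative 0) (at t)" by simp
    then have "(fP q has_real_derivative 0) (at t)"
      by (rule has_field_derivative_transform_within_open[of _ _ _ "{..<0}"]) (use 2 in \<open>auto simp: fP_def\<close>)
    then show ?thesis using 2 by (simp add: fP_def)
  next
    case 3
    have "((\<lambda>y. (fP q y - fP q 0) / (y - 0)) \<longlongrightarrow> 0) (at 0)"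
    proof (rule filterlim_split_at)
      have ev: "eventually (\<lambda>y. y < 0) (at_left (0::real))" by (simp add: eventually_at_filter)
      show "((\<lambda>y. (fP q y - fP q 0) / (y - 0)) \<longlongrightarrow> 0) (at_left 0)"
        by (rule Lim_transform_eventually[OF tendsto_const[of 0]])
           (use ev in \<open>eventually_elim, simp add: fP_def\<close>)
    next
      have lim: "((\<lambda>y. q (inverse y) * inverse y ^ 1 * exp (- inverse y)) \<longlongrightarrow> 0) (at_right 0)"
        by (rule filterlim_compose[OF polys_lim[OF q] filterlim_inverse_at_top_right])
      show "((\<lambda>y. (fP q y - fP q 0) / (y - 0)) \<longlongrightarrow> 0) (at_right 0)"
        by (rule Lim_transform_eventually[OF lim])
           (use eventually_at_right_less[of "0::real"] in \<open>eventually_elim, simp add: fP_def field_simps\<close>)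
    qed
    then have "(fP q has_real_derivative 0) (at 0)" by (simp add: has_field_derivative_iff)
    then show ?thesis using 3 by (simp add: fP_def)
  qed
qed

definition A0 :: "(real \<Rightarrow> real) set" where "A0 = fP ` polys"

lemma smooth_A0: "smooth_fam A0"
  unfolding smooth_fam_def A0_def
proof
  fix a assume "a \<in> fP ` polys"
  then obtain q where q: "q \<in> polys" "a = fP q" by blast
  obtain q' where q': "q' \<in> polys" "\<And>s. (q has_real_derivative q' s) (at s)" using polys_deriv[OF q(1)] by blast
  have "(\<lambda>s. s * (s * (q s + (-1) * q' s))) \<in> polys"
    by (intro polys.ps polys.pa polys.pm q(1) q'(1))
  then show "\<exists>a'\<in>fP ` polys. \<forall>t. (a has_real_derivative a' t) (at t)"
    using fP_deriv[OF q(1) q'(2)] q(2) by (intro bexI[of _ "fP (\<lambda>s. s * (s * (q s + (-1) * q' s)))"]) auto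
qed

definition psi :: "real \<Rightarrow> real" where "psi = fP (\<lambda>s. 1)"

lemma psi_eq: "psi t = (if t > 0 then exp (- (1/t)) else 0)"
  by (simp add: psi_def fP_def)

definition kk :: "real \<Rightarrow> real" where
  "kk t = psi (2 - t) * inverse (psi (2 - t) + psi (t - 1))"

lemma denom_pos: "psi (2 - t) + psi (t - 1) > 0"
  by (cases "t < 2") (auto simp: psi_eq add_pos_nonneg add_nonneg_pos)

lemma kk_Cls: "kk \<in> Cls A0"
proof -
  have psiA: "psi \<in> A0" unfolding A0_def psi_def by (rule imageI, rule polys.pc)
  have bl: "bounded_linear (\<lambda>p::real. - p)" by (rule bounded_linear_minus[OF bounded_linear_ident])
  have l1: "(\<lambda>t::real. 2 - t) \<in> Cls A0"
    using Cls.add[OF Cls.cst[of 2] Cls.lin[OF bl]] by simp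
  have l2: "(\<lambda>t::real. t - 1) \<in> Cls A0"
    using Cls.add[OF Cls.cst[of "-1"] Cls.lin[OF bounded_linear_ident]] by simp
  have p1: "(\<lambda>t::real. psi (2 - t)) \<in> Cls A0" by (rule Cls.cmp[OF psiA l1])
  have p2: "(\<lambda>t::real. psi (t - 1)) \<in> Cls A0" by (rule Cls.cmp[OF psiA l2])
  have "(\<lambda>t::real. psi (2 - t) * inverse (psi (2 - t) + psi (t - 1))) \<in> Cls A0"
    by (rule Cls.mul[OF p1 Cls.inv[OF Cls.add[OF p1 p2]]]) (use denom_pos in \<open>auto simp: less_le\<close>)
  then show ?thesis by (simp add: kk_def[abs_def])
qed

lemma kk_1: "t \<le> 1 \<Longrightarrow> kk t = 1"
  using denom_pos[of t] by (simp add: kk_def psi_eq)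

lemma kk_0: "t \<ge> 2 \<Longrightarrow> kk t = 0"
  by (simp add: kk_def psi_eq)

lemma bnd12:
  fixes f :: "real \<Rightarrow> real"
  assumes "\<And>t. (f has_real_derivative f' t) (at t)"
  shows "\<exists>M. \<forall>t\<in>{1..2}. \<bar>f t\<bar> \<le> M"
proof -
  have "continuous_on {1..2} f"
    using assms by (intro continuous_at_imp_continuous_on) (auto intro: DERIV_isCont)
  then have "bounded (f ` {1..2})" by (intro compact_imp_bounded compact_continuous_image) auto
  then show ?thesis unfolding bounded_iff by auto
qed

lemma deriv_zero_open:
  fixes f :: "real \<Rightarrow> real"
  assumes "(f has_real_derivative d) (at t)" "open S" "t \<in> S" "\<And>s. s \<in> S \<Longrightarrow> f s = c"
  shows "d = 0"
proof -
  have "((\<lambda>_. c) has_real_derivative d) (at t)"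
    by (rule has_field_derivative_transform_within_open[OF assms(1,2,3)]) (use assms(4) in auto)
  then show ?thesis using DERIV_const DERIV_unique by blast
qed

lemma kk_props:
  "\<exists>k1 k2 M. (\<forall>t. (kk has_real_derivative k1 t) (at t)) \<and> (\<forall>t. (k1 has_real_derivative k2 t) (at t))
     \<and> (\<forall>t. t < 1 \<or> t > 2 \<longrightarrow> k1 t = 0 \<and> k2 t = 0)
     \<and> M \<ge> 1 \<and> (\<forall>t. \<bar>kk t\<bar> \<le> M \<and> \<bar>k1 t\<bar> \<le> M \<and> \<bar>k2 t\<bar> \<le> M) \<and> (\<forall>t. isCont k2 t)"
proof -
  have sf: "smooth_fam (Cls A0 :: (real \<Rightarrow> real) set)" by (rule smooth_fam_Cls[OF smooth_A0])
  obtain k1 where k1: "k1 \<in> Cls A0" "\<And>t. (kk has_real_derivative k1 t) (at t)"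
    using sf kk_Cls unfolding smooth_fam_def by blast
  obtain k2 where k2: "k2 \<in> Cls A0" "\<And>t. (k1 has_real_derivative k2 t) (at t)"
    using sf k1(1) unfolding smooth_fam_def by blast
  obtain k3 where k3: "\<And>t. (k2 has_real_derivative k3 t) (at t)"
    using sf k2(1) unfolding smooth_fam_def by blast
  have z1: "k1 t = 0" if "t < 1 \<or> t > 2" for t
  proof (cases "t < 1")
    case True
    show ?thesis by (rule deriv_zero_open[where S="{..<1}" and c=1, OF k1(2)]) (use True kk_1 in auto)
  next
    case False
    then have "t > 2" using that by auto
    show ?thesis by (rule deriv_zero_open[where S="{2<..}" and c=0, OF k1(2)]) (use \<open>t > 2\<close> kk_0 in auto)
  qed
  have z2: "k2 t = 0" if "t < 1 \<or> t > 2" for t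
  proof (cases "t < 1")
    case True
    show ?thesis by (rule deriv_zero_open[where S="{..<1}" and c=0, OF k2(2)]) (use True z1 in auto)
  next
    case False
    then have "t > 2" using that by auto
    show ?thesis by (rule deriv_zero_open[where S="{2<..}" and c=0, OF k2(2)]) (use \<open>t > 2\<close> z1 in auto)
  qed
  obtain M0 where M0: "\<forall>t\<in>{1..2}. \<bar>kk t\<bar> \<le> M0" using bnd12[OF k1(2)] by blast
  obtain M1 where M1: "\<forall>t\<in>{1..2}. \<bar>k1 t\<bar> \<le> M1" using bnd12[OF k2(2)] by blast
  obtain M2 where M2: "\<forall>t\<in>{1..2}. \<bar>k2 t\<bar> \<le> M2" using bnd12[OF k3] by blast
  define M where "M = max 1 (max M0 (max M1 M2))"
  have "\<bar>kk t\<bar> \<le> M \<and> \<bar>k1 t\<bar> \<le> M \<and> \<bar>k2 t\<bar> \<le> M" for t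
  proof (cases "t \<in> {1..2}")
    case True
    then have "\<bar>kk t\<bar> \<le> M0" "\<bar>k1 t\<bar> \<le> M1" "\<bar>k2 t\<bar> \<le> M2" using M0 M1 M2 by auto
    then show ?thesis unfolding M_def by linarith
  next
    case False
    then have "t < 1 \<or> t > 2" by auto
    moreover have "\<bar>kk t\<bar> \<le> 1" using kk_1 kk_0 \<open>t < 1 \<or> t > 2\<close> by (cases "t < 1") auto
    ultimately show ?thesis using z1 z2 by (auto simp: M_def)
  qed
  moreover have "\<forall>t. isCont k2 t" using DERIV_isCont[OF k3] by blast
  ultimately show ?thesis using k1(2) k2(2) z1 z2 by (intro exI[of _ k1] exI[of _ k2] exI[of _ M]) (auto simp: M_def)
qed

lemma dd_GK:
  fixes \<Phi> \<Psi> :: "'a::euclidean_space \<Rightarrow> real" and HF HS :: "'a \<Rightarrow> 'a \<Rightarrow> real"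
  assumes dF: "\<And>p. (\<Phi> has_derivative HF p) (at p)"
    and dHF: "\<And>v p. ((\<lambda>q. HF q v) has_derivative (\<lambda>u. HF u v)) (at p)"
    and dS: "\<And>p. (\<Psi> has_derivative HS p) (at p)"
    and dHS: "\<And>v p. ((\<lambda>q. HS q v) has_derivative (\<lambda>u. HS u v)) (at p)"
    and G1: "\<And>t. (G has_real_derivative G1 t) (at t)" and G2: "\<And>t. (G1 has_real_derivative G2 t) (at t)"
    and K1: "\<And>t. (K has_real_derivative K1 t) (at t)" and K2: "\<And>t. (K1 has_real_derivative K2 t) (at t)"
  shows "dd [v] (\<lambda>p. G (\<Phi> p) * K (\<Psi> p)) p = G1 (\<Phi> p) * HF p v * K (\<Psi> p) + G (\<Phi> p) * K1 (\<Psi> p) * HS p v"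
    and "dd [u, v] (\<lambda>p. G (\<Phi> p) * K (\<Psi> p)) p =
           G2 (\<Phi> p) * HF p u * HF p v * K (\<Psi> p) + G1 (\<Phi> p) * HF u v * K (\<Psi> p)
         + G1 (\<Phi> p) * HF p v * K1 (\<Psi> p) * HS p u + G1 (\<Phi> p) * HF p u * K1 (\<Psi> p) * HS p v
         + G (\<Phi> p) * K2 (\<Psi> p) * HS p u * HS p v + G (\<Phi> p) * K1 (\<Psi> p) * HS u v"
proof -
  let ?f = "\<lambda>p. G (\<Phi> p) * K (\<Psi> p)"
  let ?D = "\<lambda>p v. G1 (\<Phi> p) * HF p v * K (\<Psi> p) + G (\<Phi> p) * K1 (\<Psi> p) * HS p v"
  have hd1: "(?f has_derivative ?D p) (at p)" for p
  proof -
    have "(?f has_derivative (\<lambda>h. G (\<Phi> p) * (K1 (\<Psi> p) * HS p h) + G1 (\<Phi> p) * HF p h * K (\<Psi> p))) (at p)"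
      by (rule has_derivative_mult[OF hd_comp_real[OF G1 dF] hd_comp_real[OF K1 dS]])
    moreover have "(\<lambda>h. G (\<Phi> p) * (K1 (\<Psi> p) * HS p h) + G1 (\<Phi> p) * HF p h * K (\<Psi> p)) = ?D p"
      by (rule ext) (simp add: algebra_simps)
    ultimately show ?thesis by simp
  qed
  have fd1: "frechet_derivative ?f (at p) = ?D p" for p
    by (rule frechet_derivative_at[OF hd1, symmetric])
  have dd1: "dd [v] ?f = (\<lambda>p. ?D p v)" for v by (simp add: fd1)
  then show "dd [v] ?f p = ?D p v" by simp
  let ?E = "\<lambda>u. G2 (\<Phi> p) * HF p u * HF p v * K (\<Psi> p) + G1 (\<Phi> p) * HF u v * K (\<Psi> p)
         + G1 (\<Phi> p) * HF p v * K1 (\<Psi> p) * HS p u + G1 (\<Phi> p) * HF p u * K1 (\<Psi> p) * HS p v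
         + G (\<Phi> p) * K2 (\<Psi> p) * HS p u * HS p v + G (\<Phi> p) * K1 (\<Psi> p) * HS u v"
  have hd2: "((\<lambda>q. ?D q v) has_derivative ?E) (at p)"
  proof -
    have "((\<lambda>q. ?D q v) has_derivative
      (\<lambda>h. (G1 (\<Phi> p) * HF p v * (K1 (\<Psi> p) * HS p h) + (G1 (\<Phi> p) * HF h v + G2 (\<Phi> p) * HF p h * HF p v) * K (\<Psi> p))
         + (G (\<Phi> p) * K1 (\<Psi> p) * HS h v + (G (\<Phi> p) * (K2 (\<Psi> p) * HS p h) + G1 (\<Phi> p) * HF p h * K1 (\<Psi> p)) * HS p v))) (at p)"
      by (rule has_derivative_add[OF has_derivative_mult[OF has_derivative_mult[OF hd_comp_real[OF G2 dF] dHF] hd_comp_real[OF K1 dS]]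
             has_derivative_mult[OF has_derivative_mult[OF hd_comp_real[OF G1 dF] hd_comp_real[OF K2 dS]] dHS]])
    moreover have "(\<lambda>h. (G1 (\<Phi> p) * HF p v * (K1 (\<Psi> p) * HS p h) + (G1 (\<Phi> p) * HF h v + G2 (\<Phi> p) * HF p h * HF p v) * K (\<Psi> p))
         + (G (\<Phi> p) * K1 (\<Psi> p) * HS h v + (G (\<Phi> p) * (K2 (\<Psi> p) * HS p h) + G1 (\<Phi> p) * HF p h * K1 (\<Psi> p)) * HS p v)) = ?E"
      by (rule ext) (simp add: algebra_simps)
    ultimately show ?thesis by simp
  qed
  have "dd [u, v] ?f p = frechet_derivative (\<lambda>q. ?D q v) (at p) u"
    by (simp add: dd1[of v, symmetric])
  also have "\<dots> = ?E u" by (simp add: frechet_derivative_at[OF hd2, symmetric])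
  finally show "dd [u, v] ?f p = ?E u" .
qed

type_synonym 'n ps = "(real^'n) \<times> (real^'n)"

definition HF :: "real \<Rightarrow> real \<Rightarrow> 'n::finite ps \<Rightarrow> 'n ps \<Rightarrow> real" where
  "HF \<omega> \<gamma> u v = 2 * \<omega>\<^sup>2 * (fst u \<bullet> fst v) + 2 * (((2 * \<gamma>) *\<^sub>R fst u + snd u) \<bullet> ((2 * \<gamma>) *\<^sub>R fst v + snd v))"
definition HS :: "'n::finite ps \<Rightarrow> 'n ps \<Rightarrow> real" where
  "HS u v = 2 * (fst u \<bullet> fst v + snd u \<bullet> snd v)"
definition PhiF :: "real \<Rightarrow> real \<Rightarrow> 'n::finite ps \<Rightarrow> real" where
  "PhiF \<omega> \<gamma> p = \<omega>\<^sup>2 * (fst p \<bullet> fst p) + ((2 * \<gamma>) *\<^sub>R fst p + snd p) \<bullet> ((2 * \<gamma>) *\<^sub>R fst p + snd p)"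
definition PsiF :: "'n::finite ps \<Rightarrow> real" where
  "PsiF p = fst p \<bullet> fst p + snd p \<bullet> snd p"

lemma dPhi: "(PhiF \<omega> \<gamma> has_derivative HF \<omega> \<gamma> p) (at p)"
proof -
  have "(PhiF \<omega> \<gamma> has_derivative (\<lambda>h. \<omega>\<^sup>2 * (fst p \<bullet> fst h + fst h \<bullet> fst p)
      + (((2 * \<gamma>) *\<^sub>R fst p + snd p) \<bullet> ((2 * \<gamma>) *\<^sub>R fst h + snd h) + ((2 * \<gamma>) *\<^sub>R fst h + snd h) \<bullet> ((2 * \<gamma>) *\<^sub>R fst p + snd p)))) (at p)"
    unfolding PhiF_def[abs_def]
    by (intro derivative_eq_intros) auto
  moreover have "(\<lambda>h. \<omega>\<^sup>2 * (fst p \<bullet> fst h + fst h \<bullet> fst p)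
      + (((2 * \<gamma>) *\<^sub>R fst p + snd p) \<bullet> ((2 * \<gamma>) *\<^sub>R fst h + snd h) + ((2 * \<gamma>) *\<^sub>R fst h + snd h) \<bullet> ((2 * \<gamma>) *\<^sub>R fst p + snd p))) = HF \<omega> \<gamma> p"
    by (rule ext) (simp add: HF_def inner_commute algebra_simps)
  ultimately show ?thesis by simp
qed

lemma dHF: "((\<lambda>q. HF \<omega> \<gamma> q v) has_derivative (\<lambda>u. HF \<omega> \<gamma> u v)) (at p)"
proof -
  have "bounded_linear (\<lambda>u. HF \<omega> \<gamma> u v)"
    unfolding HF_def
    by (intro bounded_linear_add bounded_linear_const_mult bounded_linear_compose[OF bounded_linear_inner_left]
         bounded_linear_fst bounded_linear_snd bounded_linear_compose[OF bounded_linear_scaleR_right bounded_linear_fst]) 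
  then show ?thesis by (rule bounded_linear_imp_has_derivative)
qed

lemma dPsi: "(PsiF has_derivative HS p) (at p)"
proof -
  have "(PsiF has_derivative (\<lambda>h. (fst p \<bullet> fst h + fst h \<bullet> fst p) + (snd p \<bullet> snd h + snd h \<bullet> snd p))) (at p)"
    unfolding PsiF_def[abs_def]
    by (intro derivative_eq_intros) auto
  moreover have "(\<lambda>h. (fst p \<bullet> fst h + fst h \<bullet> fst p) + (snd p \<bullet> snd h + snd h \<bullet> snd p)) = HS p"
    by (rule ext) (simp add: HS_def inner_commute algebra_simps)
  ultimately show ?thesis by simp
qed

lemma dHS: "((\<lambda>q. HS q v) has_derivative (\<lambda>u. HS u v)) (at p)"
proof -
  have "bounded_linear (\<lambda>u. HS u v)"
    unfolding HS_def
    by (intro bounded_linear_add bounded_linear_const_mult bounded_linear_compose[OF bounded_linear_inner_left]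
         bounded_linear_fst bounded_linear_snd)
  then show ?thesis by (rule bounded_linear_imp_has_derivative)
qed

lemma HF_vals:
  "HF \<omega> \<gamma> p (ex j) = 2 * \<omega>\<^sup>2 * (fst p $ j) + 4 * \<gamma> * (2 * \<gamma> * (fst p $ j) + snd p $ j)"
  "HF \<omega> \<gamma> p (exi j) = 2 * (2 * \<gamma> * (fst p $ j) + snd p $ j)"
  "HF \<omega> \<gamma> (ex j) (ex j) = 2 * \<omega>\<^sup>2 + 8 * \<gamma>\<^sup>2"
  "HF \<omega> \<gamma> (exi j) (exi j) = 2"
  "HF \<omega> \<gamma> (ex j) (exi j) = 4 * \<gamma>"
  "HS p (ex j) = 2 * (fst p $ j)"
  "HS p (exi j) = 2 * (snd p $ j)"
  "HS (ex j) (ex j) = 2"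
  "HS (exi j) (exi j) = 2"
  "HS (ex j) (exi j) = 0"
  by (simp_all add: HF_def HS_def ex_def exi_def inner_axis inner_axis' inner_add_left inner_add_right
      inner_axis_axis algebra_simps power2_eq_square)

lemma QFP_adj_sum:
  "QFP_adj \<omega>0 \<gamma> Dpp Dqq Dpq \<phi> p = (\<Sum>j\<in>UNIV. - (snd p $ j * dd [ex j] \<phi> p) + \<omega>0\<^sup>2 * (fst p $ j * dd [exi j] \<phi> p)
     - Dpp * dd [exi j, exi j] \<phi> p + 2 * \<gamma> * (snd p $ j * dd [exi j] \<phi> p) - Dqq * dd [ex j, ex j] \<phi> p
     - 2 * Dpq * dd [ex j, exi j] \<phi> p)"
  by (simp add: QFP_adj_def Let_def sum.distrib sum_subtractf sum_negf sum_distrib_left)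

definition P1 :: "real \<Rightarrow> real \<Rightarrow> real \<Rightarrow> real \<Rightarrow> real \<Rightarrow> real \<Rightarrow> real \<Rightarrow> real" where
  "P1 \<omega> \<gamma> Dpp Dqq Dpq x y = - y * (2 * \<omega>\<^sup>2 * x + 4 * \<gamma> * (2 * \<gamma> * x + y)) + \<omega>\<^sup>2 * x * (2 * (2 * \<gamma> * x + y))
     + 2 * \<gamma> * y * (2 * (2 * \<gamma> * x + y)) - (2 * Dpp + Dqq * (2 * \<omega>\<^sup>2 + 8 * \<gamma>\<^sup>2) + 8 * \<gamma> * Dpq)"
definition P2 :: "real \<Rightarrow> real \<Rightarrow> real \<Rightarrow> real \<Rightarrow> real \<Rightarrow> real \<Rightarrow> real \<Rightarrow> real" where
  "P2 \<omega> \<gamma> Dpp Dqq Dpq x y = - y * (2 * x) + \<omega>\<^sup>2 * x * (2 * y) + 2 * \<gamma> * y * (2 * y) - 2 * Dpp - 2 * Dqq"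
definition P3 :: "real \<Rightarrow> real \<Rightarrow> real \<Rightarrow> real \<Rightarrow> real \<Rightarrow> real \<Rightarrow> real \<Rightarrow> real" where
  "P3 \<omega> \<gamma> Dpp Dqq Dpq x y = Dpp * (2 * (2 * \<gamma> * x + y))\<^sup>2 + Dqq * (2 * \<omega>\<^sup>2 * x + 4 * \<gamma> * (2 * \<gamma> * x + y))\<^sup>2
     + 2 * Dpq * ((2 * \<omega>\<^sup>2 * x + 4 * \<gamma> * (2 * \<gamma> * x + y)) * (2 * (2 * \<gamma> * x + y)))"
definition P4 :: "real \<Rightarrow> real \<Rightarrow> real \<Rightarrow> real \<Rightarrow> real \<Rightarrow> real \<Rightarrow> real \<Rightarrow> real" where
  "P4 \<omega> \<gamma> Dpp Dqq Dpq x y = Dpp * (2 * (2 * \<gamma> * x + y)) * (2 * y) + Dqq * (2 * \<omega>\<^sup>2 * x + 4 * \<gamma> * (2 * \<gamma> * x + y)) * (2 * x)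
     + Dpq * ((2 * \<omega>\<^sup>2 * x + 4 * \<gamma> * (2 * \<gamma> * x + y)) * (2 * y) + (2 * (2 * \<gamma> * x + y)) * (2 * x))"
definition P5 :: "real \<Rightarrow> real \<Rightarrow> real \<Rightarrow> real \<Rightarrow> real \<Rightarrow> real \<Rightarrow> real \<Rightarrow> real" where
  "P5 \<omega> \<gamma> Dpp Dqq Dpq x y = Dpp * (2 * y)\<^sup>2 + Dqq * (2 * x)\<^sup>2 + 2 * Dpq * ((2 * x) * (2 * y))"

lemma QFP_formula:
  fixes p :: "'n::finite ps"
  assumes G1: "\<And>t. (G has_real_derivative G1 t) (at t)" and G2: "\<And>t. (G1 has_real_derivative G2 t) (at t)"
    and K1: "\<And>t. (K has_real_derivative K1 t) (at t)" and K2: "\<And>t. (K1 has_real_derivative K2 t) (at t)"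
  shows "QFP_adj \<omega> \<gamma> Dpp Dqq Dpq (\<lambda>p. G (PhiF \<omega> \<gamma> p) * K (PsiF p)) p =
      G1 (PhiF \<omega> \<gamma> p) * K (PsiF p) * (\<Sum>j\<in>UNIV. P1 \<omega> \<gamma> Dpp Dqq Dpq (fst p $ j) (snd p $ j))
    + G (PhiF \<omega> \<gamma> p) * K1 (PsiF p) * (\<Sum>j\<in>UNIV. P2 \<omega> \<gamma> Dpp Dqq Dpq (fst p $ j) (snd p $ j))
    - G2 (PhiF \<omega> \<gamma> p) * K (PsiF p) * (\<Sum>j\<in>UNIV. P3 \<omega> \<gamma> Dpp Dqq Dpq (fst p $ j) (snd p $ j))
    - 2 * G1 (PhiF \<omega> \<gamma> p) * K1 (PsiF p) * (\<Sum>j\<in>UNIV. P4 \<omega> \<gamma> Dpp Dqq Dpq (fst p $ j) (snd p $ j))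
    - G (PhiF \<omega> \<gamma> p) * K2 (PsiF p) * (\<Sum>j\<in>UNIV. P5 \<omega> \<gamma> Dpp Dqq Dpq (fst p $ j) (snd p $ j))"
    (is "?L = ?R")
proof -
  note d1 = dd_GK(1)[OF dPhi dHF dPsi dHS G1 G2 K1 K2]
  note d2 = dd_GK(2)[OF dPhi dHF dPsi dHS G1 G2 K1 K2]
  define g0 where "g0 = G (PhiF \<omega> \<gamma> p)"
  define g1 where "g1 = G1 (PhiF \<omega> \<gamma> p)"
  define g2 where "g2 = G2 (PhiF \<omega> \<gamma> p)"
  define k0 where "k0 = K (PsiF p)"
  define k1 where "k1 = K1 (PsiF p)"
  define k2 where "k2 = K2 (PsiF p)"
  have "?R = (\<Sum>j\<in>UNIV. g1 * k0 * P1 \<omega> \<gamma> Dpp Dqq Dpq (fst p $ j) (snd p $ j)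
      + g0 * k1 * P2 \<omega> \<gamma> Dpp Dqq Dpq (fst p $ j) (snd p $ j)
      - g2 * k0 * P3 \<omega> \<gamma> Dpp Dqq Dpq (fst p $ j) (snd p $ j)
      - 2 * g1 * k1 * P4 \<omega> \<gamma> Dpp Dqq Dpq (fst p $ j) (snd p $ j)
      - g0 * k2 * P5 \<omega> \<gamma> Dpp Dqq Dpq (fst p $ j) (snd p $ j))"
    unfolding g0_def g1_def g2_def k0_def k1_def k2_def
    by (simp add: sum.distrib sum_subtractf sum_distrib_left)
  also have "\<dots> = ?L"
    unfolding QFP_adj_sum d1 d2 HF_vals
    by (rule sum.cong) (simp_all add: g0_def g1_def g2_def k0_def k1_def k2_def P1_def P2_def P3_def P4_def P5_def
       power2_eq_square algebra_simps ex_def exi_def axis_def)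
  finally show ?thesis by simp
qed

lemma quad_bound:
  fixes A B C x y :: real
  shows "\<bar>A * x\<^sup>2 + B * x * y + C * y\<^sup>2\<bar> \<le> (\<bar>A\<bar> + \<bar>B\<bar> + \<bar>C\<bar>) * (x\<^sup>2 + y\<^sup>2)"
proof -
  have xy: "\<bar>x * y\<bar> \<le> x\<^sup>2 + y\<^sup>2"
  proof -
    have "0 \<le> (\<bar>x\<bar> - \<bar>y\<bar>)\<^sup>2" by simp
    then have "2 * \<bar>x\<bar> * \<bar>y\<bar> \<le> x\<^sup>2 + y\<^sup>2" by (simp add: power2_diff)
    moreover have "0 \<le> \<bar>x\<bar> * \<bar>y\<bar>" by simp
    ultimately have "\<bar>x\<bar> * \<bar>y\<bar> \<le> x\<^sup>2 + y\<^sup>2" by linarith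
    then show ?thesis by (simp add: abs_mult)
  qed
  have x2: "x\<^sup>2 \<le> x\<^sup>2 + y\<^sup>2" and y2: "y\<^sup>2 \<le> x\<^sup>2 + y\<^sup>2" by simp_all
  have "\<bar>A * x\<^sup>2\<bar> \<le> \<bar>A\<bar> * (x\<^sup>2 + y\<^sup>2)" using mult_left_mono[OF x2, of "\<bar>A\<bar>"] by (simp add: abs_mult)
  moreover have "\<bar>B * x * y\<bar> \<le> \<bar>B\<bar> * (x\<^sup>2 + y\<^sup>2)" using mult_left_mono[OF xy, of "\<bar>B\<bar>"] by (simp add: abs_mult mult.assoc)
  moreover have "\<bar>C * y\<^sup>2\<bar> \<le> \<bar>C\<bar> * (x\<^sup>2 + y\<^sup>2)" using mult_left_mono[OF y2, of "\<bar>C\<bar>"] by (simp add: abs_mult)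
  moreover have "\<bar>A * x\<^sup>2 + B * x * y + C * y\<^sup>2\<bar> \<le> \<bar>A * x\<^sup>2\<bar> + \<bar>B * x * y\<bar> + \<bar>C * y\<^sup>2\<bar>"
    by (rule order.trans[OF abs_triangle_ineq add_right_mono[OF abs_triangle_ineq]])
  moreover have "(\<bar>A\<bar> + \<bar>B\<bar> + \<bar>C\<bar>) * (x\<^sup>2 + y\<^sup>2) = \<bar>A\<bar> * (x\<^sup>2 + y\<^sup>2) + \<bar>B\<bar> * (x\<^sup>2 + y\<^sup>2) + \<bar>C\<bar> * (x\<^sup>2 + y\<^sup>2)"
    by (simp add: distrib_right)
  ultimately show ?thesis by linarith
qed

lemma P1_val: "\<gamma> * \<omega> = 0 \<Longrightarrow> P1 \<omega> \<gamma> Dpp Dqq Dpq x y = - (2 * Dpp + Dqq * (2 * \<omega>\<^sup>2 + 8 * \<gamma>\<^sup>2) + 8 * \<gamma> * Dpq)"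
proof -
  assume h: "\<gamma> * \<omega> = 0"
  have "P1 \<omega> \<gamma> Dpp Dqq Dpq x y = 4 * (\<gamma> * \<omega>) * \<omega> * x\<^sup>2 - (2 * Dpp + Dqq * (2 * \<omega>\<^sup>2 + 8 * \<gamma>\<^sup>2) + 8 * \<gamma> * Dpq)"
    by (simp add: P1_def power2_eq_square algebra_simps)
  then show ?thesis using h by simp
qed

lemma P2_bound: "\<bar>P2 \<omega> \<gamma> Dpp Dqq Dpq x y\<bar> \<le> (\<bar>2 * \<omega>\<^sup>2 - 2\<bar> + \<bar>4 * \<gamma>\<bar>) * (x\<^sup>2 + y\<^sup>2) + \<bar>2 * Dpp + 2 * Dqq\<bar>"
proof -
  have "P2 \<omega> \<gamma> Dpp Dqq Dpq x y = (0 * x\<^sup>2 + (2 * \<omega>\<^sup>2 - 2) * x * y + (4 * \<gamma>) * y\<^sup>2) - (2 * Dpp + 2 * Dqq)"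
    by (simp add: P2_def power2_eq_square algebra_simps)
  moreover have "\<bar>0 * x\<^sup>2 + (2 * \<omega>\<^sup>2 - 2) * x * y + (4 * \<gamma>) * y\<^sup>2\<bar> \<le> (\<bar>0\<bar> + \<bar>2 * \<omega>\<^sup>2 - 2\<bar> + \<bar>4 * \<gamma>\<bar>) * (x\<^sup>2 + y\<^sup>2)"
    by (rule quad_bound)
  ultimately show ?thesis by simp
qed

lemma P4_bound: "\<bar>P4 \<omega> \<gamma> Dpp Dqq Dpq x y\<bar> \<le>
   (\<bar>Dqq * (4 * \<omega>\<^sup>2 + 16 * \<gamma>\<^sup>2) + 8 * \<gamma> * Dpq\<bar> + \<bar>8 * \<gamma> * Dpp + 8 * \<gamma> * Dqq + Dpq * (4 * \<omega>\<^sup>2 + 16 * \<gamma>\<^sup>2) + 4 * Dpq\<bar>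
     + \<bar>4 * Dpp + 8 * \<gamma> * Dpq\<bar>) * (x\<^sup>2 + y\<^sup>2)"
proof -
  have h: "P4 \<omega> \<gamma> Dpp Dqq Dpq x y = (Dqq * (4 * \<omega>\<^sup>2 + 16 * \<gamma>\<^sup>2) + 8 * \<gamma> * Dpq) * x\<^sup>2
     + (8 * \<gamma> * Dpp + 8 * \<gamma> * Dqq + Dpq * (4 * \<omega>\<^sup>2 + 16 * \<gamma>\<^sup>2) + 4 * Dpq) * x * y + (4 * Dpp + 8 * \<gamma> * Dpq) * y\<^sup>2"
    by (simp add: P4_def power2_eq_square algebra_simps)
  show ?thesis unfolding h by (rule quad_bound)
qed

lemma P5_bound: "\<bar>P5 \<omega> \<gamma> Dpp Dqq Dpq x y\<bar> \<le> (\<bar>4 * Dqq\<bar> + \<bar>8 * Dpq\<bar> + \<bar>4 * Dpp\<bar>) * (x\<^sup>2 + y\<^sup>2)"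
proof -
  have h: "P5 \<omega> \<gamma> Dpp Dqq Dpq x y = (4 * Dqq) * x\<^sup>2 + (8 * Dpq) * x * y + (4 * Dpp) * y\<^sup>2"
    by (simp add: P5_def power2_eq_square algebra_simps)
  show ?thesis unfolding h by (rule quad_bound)
qed

lemma P3_bound:
  assumes "Dpp \<ge> 0" "Dqq \<ge> 0" "Dpq \<ge> 0"
  shows "\<bar>P3 \<omega> \<gamma> Dpp Dqq Dpq x y\<bar> \<le> (4 * Dpp + 2 * Dpq + (Dqq + 2 * Dpq) * (8 * \<omega>\<^sup>2 + 32 * \<gamma>\<^sup>2)) * (\<omega>\<^sup>2 * x\<^sup>2 + (2 * \<gamma> * x + y)\<^sup>2)"
proof -
  define z where "z = 2 * \<gamma> * x + y"
  define g where "g = 2 * \<omega>\<^sup>2 * x + 4 * \<gamma> * z"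
  have P: "P3 \<omega> \<gamma> Dpp Dqq Dpq x y = Dpp * (4 * z\<^sup>2) + Dqq * g\<^sup>2 + 4 * Dpq * (g * z)"
    by (simp add: P3_def z_def g_def power2_eq_square algebra_simps)
  have gz: "\<bar>g * z\<bar> \<le> (g\<^sup>2 + z\<^sup>2) / 2"
  proof -
    have "0 \<le> (\<bar>g\<bar> - \<bar>z\<bar>)\<^sup>2" by simp
    then show ?thesis by (simp add: power2_diff abs_mult)
  qed
  have g2: "g\<^sup>2 \<le> (8 * \<omega>\<^sup>2 + 32 * \<gamma>\<^sup>2) * (\<omega>\<^sup>2 * x\<^sup>2 + z\<^sup>2)"
  proof -
    have "0 \<le> (2 * \<omega>\<^sup>2 * x - 4 * \<gamma> * z)\<^sup>2" by simp
    then have "g\<^sup>2 \<le> 2 * (2 * \<omega>\<^sup>2 * x)\<^sup>2 + 2 * (4 * \<gamma> * z)\<^sup>2"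
      unfolding g_def by (simp add: power2_eq_square algebra_simps)
    also have "\<dots> = 8 * \<omega>\<^sup>2 * (\<omega>\<^sup>2 * x\<^sup>2) + 32 * \<gamma>\<^sup>2 * z\<^sup>2" by (simp add: power2_eq_square algebra_simps)
    also have "\<dots> \<le> (8 * \<omega>\<^sup>2 + 32 * \<gamma>\<^sup>2) * (\<omega>\<^sup>2 * x\<^sup>2 + z\<^sup>2)"
      by (simp add: algebra_simps)
    finally show ?thesis .
  qed
  have "\<bar>P3 \<omega> \<gamma> Dpp Dqq Dpq x y\<bar> \<le> Dpp * (4 * z\<^sup>2) + Dqq * g\<^sup>2 + 4 * Dpq * \<bar>g * z\<bar>"
  proof -
    have "\<bar>Dpp * (4 * z\<^sup>2) + Dqq * g\<^sup>2 + 4 * Dpq * (g * z)\<bar> \<le> \<bar>Dpp * (4 * z\<^sup>2)\<bar> + \<bar>Dqq * g\<^sup>2\<bar> + \<bar>4 * Dpq * (g * z)\<bar>"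
      by (rule order.trans[OF abs_triangle_ineq add_right_mono[OF abs_triangle_ineq]])
    moreover have "\<bar>Dpp * (4 * z\<^sup>2)\<bar> = Dpp * (4 * z\<^sup>2)" "\<bar>Dqq * g\<^sup>2\<bar> = Dqq * g\<^sup>2"
        "\<bar>4 * Dpq * (g * z)\<bar> = 4 * Dpq * \<bar>g * z\<bar>"
      using assms by (simp_all add: abs_mult)
    ultimately show ?thesis unfolding P by linarith
  qed
  also have "\<dots> \<le> Dpp * (4 * z\<^sup>2) + Dqq * g\<^sup>2 + 4 * Dpq * ((g\<^sup>2 + z\<^sup>2) / 2)"
    using gz assms by (intro add_left_mono mult_left_mono) auto
  also have "\<dots> = (4 * Dpp + 2 * Dpq) * z\<^sup>2 + (Dqq + 2 * Dpq) * g\<^sup>2" by (simp add: algebra_simps)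
  also have "\<dots> \<le> (4 * Dpp + 2 * Dpq) * (\<omega>\<^sup>2 * x\<^sup>2 + z\<^sup>2) + (Dqq + 2 * Dpq) * ((8 * \<omega>\<^sup>2 + 32 * \<gamma>\<^sup>2) * (\<omega>\<^sup>2 * x\<^sup>2 + z\<^sup>2))"
    using assms g2 by (intro add_mono mult_left_mono) auto
  also have "\<dots> = (4 * Dpp + 2 * Dpq + (Dqq + 2 * Dpq) * (8 * \<omega>\<^sup>2 + 32 * \<gamma>\<^sup>2)) * (\<omega>\<^sup>2 * x\<^sup>2 + (2 * \<gamma> * x + y)\<^sup>2)"
    by (simp add: z_def algebra_simps)
  finally show ?thesis .
qed

lemma PhiF_sum: "PhiF \<omega> \<gamma> p = (\<Sum>j\<in>UNIV. \<omega>\<^sup>2 * (fst p $ j)\<^sup>2 + (2 * \<gamma> * (fst p $ j) + snd p $ j)\<^sup>2)"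
  by (simp add: PhiF_def inner_vec_def sum.distrib sum_distrib_left power2_eq_square algebra_simps)

lemma PsiF_sum: "PsiF p = (\<Sum>j\<in>UNIV. (fst p $ j)\<^sup>2 + (snd p $ j)\<^sup>2)"
  by (simp add: PsiF_def inner_vec_def sum.distrib power2_eq_square)

lemma PhiF_nonneg: "PhiF \<omega> \<gamma> p \<ge> 0"
  unfolding PhiF_sum by (intro sum_nonneg) auto

lemma PsiF_nonneg: "PsiF p \<ge> 0"
  unfolding PsiF_sum by (intro sum_nonneg) auto

lemma sum_bound:
  fixes P :: "real \<Rightarrow> real \<Rightarrow> real" and p :: "'n::finite ps"
  assumes "\<And>x y. \<bar>P x y\<bar> \<le> C * Q x y + E"
  shows "\<bar>\<Sum>j\<in>UNIV. P (fst p $ j) (snd p $ j)\<bar> \<le> C * (\<Sum>j\<in>UNIV. Q (fst p $ j) (snd p $ j)) + real CARD('n) * E"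
proof -
  have "\<bar>\<Sum>j\<in>UNIV. P (fst p $ j) (snd p $ j)\<bar> \<le> (\<Sum>j\<in>UNIV. \<bar>P (fst p $ j) (snd p $ j)\<bar>)" by (rule sum_abs)
  also have "\<dots> \<le> (\<Sum>j\<in>UNIV. C * Q (fst p $ j) (snd p $ j) + E :: real)" by (intro sum_mono assms)
  also have "\<dots> = C * (\<Sum>j\<in>UNIV. Q (fst p $ j) (snd p $ j)) + real CARD('n) * E"
    by (simp add: sum.distrib sum_distrib_left)
  finally show ?thesis .
qed

lemma scale_deriv:
  assumes "\<And>t. (f has_real_derivative f' t) (at t)"
  shows "((\<lambda>a. f (a / R)) has_real_derivative f' (a / R) * (1 / R)) (at a)"
proof -
  have "((\<lambda>a. a / R) has_real_derivative 1 / R) (at a)"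
    using DERIV_cdivide[OF DERIV_ident, of R] by simp
  then show ?thesis by (rule DERIV_chain2[OF assms])
qed

lemma cont_comp_univ: "continuous_on UNIV g \<Longrightarrow> continuous_on S f \<Longrightarrow> continuous_on S (\<lambda>x. g (f x))"
  by (rule continuous_on_compose2[of UNIV g S f]) auto

lemma abs_mult3_le:
  fixes a b c A B C :: real
  assumes "\<bar>a\<bar> \<le> A" "\<bar>b\<bar> \<le> B" "\<bar>c\<bar> \<le> C"
  shows "\<bar>a * b * c\<bar> \<le> A * B * C"
proof -
  have "\<bar>a * b * c\<bar> = \<bar>a\<bar> * \<bar>b\<bar> * \<bar>c\<bar>" by (simp add: abs_mult)
  also have "\<dots> \<le> A * B * C"
    using assms by (intro mult_mono) (auto intro: order.trans[OF abs_ge_zero])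
  finally show ?thesis .
qed

lemma DC_zero:
  fixes w :: "'a::euclidean_space \<Rightarrow> real" and Q :: "nat \<Rightarrow> 'a \<Rightarrow> real"
  assumes w: "integrable lebesgue w"
    and cQ: "\<And>n. continuous_on UNIV (Q n)" and cQi: "continuous_on UNIV Qi"
    and z: "\<And>n. (\<integral>p. w p * Q n p \<partial>lebesgue) = 0"
    and ev: "\<And>p. eventually (\<lambda>n. Q n p = Qi p) sequentially"
    and b: "\<And>n p. \<bar>Q n p\<bar> \<le> B"
  shows "(\<integral>p. w p * Qi p \<partial>lebesgue) = 0"
proof -
  have wm[measurable]: "w \<in> borel_measurable lebesgue" using w by (rule borel_measurable_integrable)
  have mQ[measurable]: "Q n \<in> borel_measurable lebesgue" for n
    using continuous_imp_measurable_on_sets_lebesgue[OF cQ[of n], of] by (simp add: lebesgue_on_UNIV_eq)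
  have mQi[measurable]: "Qi \<in> borel_measurable lebesgue"
    using continuous_imp_measurable_on_sets_lebesgue[OF cQi] by (simp add: lebesgue_on_UNIV_eq)
  have "(\<lambda>n. \<integral>p. w p * Q n p \<partial>lebesgue) \<longlonglongrightarrow> (\<integral>p. w p * Qi p \<partial>lebesgue)"
  proof (rule integral_dominated_convergence[where w="\<lambda>p. B * \<bar>w p\<bar>"])
    show "(\<lambda>p. w p * Qi p) \<in> borel_measurable lebesgue" by measurable
    show "(\<lambda>p. w p * Q n p) \<in> borel_measurable lebesgue" for n by measurable
    show "integrable lebesgue (\<lambda>p. B * \<bar>w p\<bar>)" using w by (intro integrable_mult_right integrable_abs)
    show "AE p in lebesgue. (\<lambda>n. w p * Q n p) \<longlonglongrightarrow> w p * Qi p"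
    proof (rule AE_I2)
      fix p
      have "eventually (\<lambda>n. w p * Q n p = w p * Qi p) sequentially" using ev[of p] by (rule eventually_mono) simp
      then show "(\<lambda>n. w p * Q n p) \<longlonglongrightarrow> w p * Qi p" by (rule tendsto_eventually)
    qed
    show "AE p in lebesgue. norm (w p * Q n p) \<le> B * \<bar>w p\<bar>" for n
    proof (rule AE_I2)
      fix p
      have "\<bar>w p\<bar> * \<bar>Q n p\<bar> \<le> \<bar>w p\<bar> * B" using b[of n p] by (rule mult_left_mono) simp
      then show "norm (w p * Q n p) \<le> B * \<bar>w p\<bar>" by (simp add: abs_mult mult.commute)
    qed
  qed
  then have "(\<lambda>n. 0::real) \<longlonglongrightarrow> (\<integral>p. w p * Qi p \<partial>lebesgue)" by (simp add: z)
  then show ?thesis using LIMSEQ_unique[OF _ tendsto_const] by metis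
qed

context
  fixes k1 k2 :: "real \<Rightarrow> real" and M :: real
  assumes kd1: "\<And>t. (kk has_real_derivative k1 t) (at t)"
    and kd2: "\<And>t. (k1 has_real_derivative k2 t) (at t)"
    and kz: "\<And>t. t < 1 \<or> t > 2 \<Longrightarrow> k1 t = 0 \<and> k2 t = 0"
    and M1: "M \<ge> 1"
    and kb: "\<And>t. \<bar>kk t\<bar> \<le> M \<and> \<bar>k1 t\<bar> \<le> M \<and> \<bar>k2 t\<bar> \<le> M"
    and kc2: "\<And>t. isCont k2 t"
begin

definition "GG R a = a * kk (a / R)"
definition "GG1 R a = kk (a / R) + (a / R) * k1 (a / R)"
definition "GG2 R a = (2 * k1 (a / R) + (a / R) * k2 (a / R)) / R"
definition "KK S b = kk (b / S)"
definition "KK1 S b = k1 (b / S) / S"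
definition "KK2 S b = k2 (b / S) / S\<^sup>2"

lemma GG_d1: "R \<noteq> 0 \<Longrightarrow> (GG R has_real_derivative GG1 R a) (at a)"
proof -
  assume R: "R \<noteq> 0"
  have "((\<lambda>a. a * kk (a / R)) has_real_derivative 1 * kk (a / R) + k1 (a / R) * (1 / R) * a) (at a)"
    by (rule DERIV_mult[OF DERIV_ident scale_deriv[OF kd1]])
  moreover have "1 * kk (a / R) + k1 (a / R) * (1 / R) * a = GG1 R a"
    by (simp add: GG1_def)
  ultimately show ?thesis by (simp add: GG_def[abs_def])
qed

lemma GG_d2: "R \<noteq> 0 \<Longrightarrow> (GG1 R has_real_derivative GG2 R a) (at a)"
proof -
  assume R: "R \<noteq> 0"
  have d: "((\<lambda>a. a / R) has_real_derivative 1 / R) (at a)"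
    using DERIV_cdivide[OF DERIV_ident, of R] by simp
  have "((\<lambda>a. kk (a / R) + (a / R) * k1 (a / R)) has_real_derivative
      k1 (a / R) * (1 / R) + (1 / R * k1 (a / R) + k2 (a / R) * (1 / R) * (a / R))) (at a)"
    by (intro DERIV_add scale_deriv[OF kd1] DERIV_mult[OF d scale_deriv[OF kd2]])
  moreover have "k1 (a / R) * (1 / R) + (1 / R * k1 (a / R) + k2 (a / R) * (1 / R) * (a / R)) = GG2 R a"
    using R by (simp add: GG2_def field_simps)
  ultimately show ?thesis by (simp add: GG1_def[abs_def])
qed

lemma KK_d1: "(KK S has_real_derivative KK1 S b) (at b)"
  using scale_deriv[OF kd1, of S b] by (simp add: KK_def[abs_def] KK1_def)

lemma KK_d2: "(KK1 S has_real_derivative KK2 S b) (at b)"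
proof -
  have "((\<lambda>b. k1 (b / S) / S) has_real_derivative k2 (b / S) * (1 / S) / S) (at b)"
    by (rule DERIV_cdivide[OF scale_deriv[OF kd2]])
  then show ?thesis by (simp add: KK1_def[abs_def] KK2_def power2_eq_square)
qed

lemma kk_cont: "continuous_on UNIV kk" "continuous_on UNIV k1" "continuous_on UNIV k2"
proof -
  have "isCont kk t" "isCont k1 t" for t using DERIV_isCont[OF kd1] DERIV_isCont[OF kd2] by auto
  then show "continuous_on UNIV kk" "continuous_on UNIV k1" "continuous_on UNIV k2"
    using kc2 by (auto intro: continuous_at_imp_continuous_on)
qed

lemma tk_bounds:
  assumes "t \<ge> 0"
  shows "\<bar>t * kk t\<bar> \<le> 2 * M" "\<bar>t * k1 t\<bar> \<le> 2 * M" "\<bar>t * k2 t\<bar> \<le> 2 * M" "\<bar>t * t * k2 t\<bar> \<le> 4 * M"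
proof -
  have all: "\<bar>t * kk t\<bar> \<le> 2 * M \<and> \<bar>t * k1 t\<bar> \<le> 2 * M \<and> \<bar>t * k2 t\<bar> \<le> 2 * M \<and> \<bar>t * t * k2 t\<bar> \<le> 4 * M"
  proof (cases "t \<le> 2")
    case True
    have tt: "\<bar>t\<bar> \<le> 2" "\<bar>t * t\<bar> \<le> 4" using True assms by (auto simp: abs_mult intro: mult_mono[of t 2 t 2, simplified])
    have "\<bar>t * kk t\<bar> \<le> 2 * M" using mult_mono[OF tt(1) conjunct1[OF kb[of t]]] by (simp add: abs_mult)
    moreover have "\<bar>t * k1 t\<bar> \<le> 2 * M" using mult_mono[OF tt(1) conjunct1[OF conjunct2[OF kb[of t]]]] by (simp add: abs_mult)
    moreover have "\<bar>t * k2 t\<bar> \<le> 2 * M" using mult_mono[OF tt(1) conjunct2[OF conjunct2[OF kb[of t]]]] by (simp add: abs_mult)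
    moreover have "\<bar>t * t * k2 t\<bar> \<le> 4 * M" using mult_mono[OF tt(2) conjunct2[OF conjunct2[OF kb[of t]]]] by (simp add: abs_mult)
    ultimately show ?thesis by blast
  next
    case False
    then have "kk t = 0" "k1 t = 0" "k2 t = 0" using kk_0 kz[of t] by auto
    then show ?thesis using M1 by simp
  qed
  then show "\<bar>t * kk t\<bar> \<le> 2 * M" "\<bar>t * k1 t\<bar> \<le> 2 * M" "\<bar>t * k2 t\<bar> \<le> 2 * M" "\<bar>t * t * k2 t\<bar> \<le> 4 * M"
    by blast+
qed

lemma kk_ci[continuous_intros]:
  "continuous_on S f \<Longrightarrow> continuous_on S (\<lambda>x. kk (f x))"
  "continuous_on S f \<Longrightarrow> continuous_on S (\<lambda>x. k1 (f x))"
  "continuous_on S f \<Longrightarrow> continuous_on S (\<lambda>x. k2 (f x))"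
  using cont_comp_univ[OF kk_cont(1)] cont_comp_univ[OF kk_cont(2)] cont_comp_univ[OF kk_cont(3)] by auto

lemma PhiF_cont[continuous_intros]: "continuous_on S (PhiF \<omega> \<gamma>)"
  unfolding PhiF_def[abs_def] by (intro continuous_intros)

lemma PsiF_cont[continuous_intros]: "continuous_on S PsiF"
  unfolding PsiF_def[abs_def] by (intro continuous_intros)

definition "phi \<omega> \<gamma> R S = (\<lambda>p. GG R (PhiF \<omega> \<gamma> p) * KK S (PsiF p))"

definition "Qf \<omega> \<gamma> Dpp Dqq Dpq R S (p :: 'n::finite ps) =
      GG1 R (PhiF \<omega> \<gamma> p) * KK S (PsiF p) * (\<Sum>j\<in>UNIV. P1 \<omega> \<gamma> Dpp Dqq Dpq (fst p $ j) (snd p $ j))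
    + GG R (PhiF \<omega> \<gamma> p) * KK1 S (PsiF p) * (\<Sum>j\<in>UNIV. P2 \<omega> \<gamma> Dpp Dqq Dpq (fst p $ j) (snd p $ j))
    - GG2 R (PhiF \<omega> \<gamma> p) * KK S (PsiF p) * (\<Sum>j\<in>UNIV. P3 \<omega> \<gamma> Dpp Dqq Dpq (fst p $ j) (snd p $ j))
    - 2 * GG1 R (PhiF \<omega> \<gamma> p) * KK1 S (PsiF p) * (\<Sum>j\<in>UNIV. P4 \<omega> \<gamma> Dpp Dqq Dpq (fst p $ j) (snd p $ j))
    - GG R (PhiF \<omega> \<gamma> p) * KK2 S (PsiF p) * (\<Sum>j\<in>UNIV. P5 \<omega> \<gamma> Dpp Dqq Dpq (fst p $ j) (snd p $ j))"

definition "psiR \<omega> \<gamma> Dpp Dqq Dpq R (p :: 'n::finite ps) =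
      GG1 R (PhiF \<omega> \<gamma> p) * (\<Sum>j\<in>UNIV. P1 \<omega> \<gamma> Dpp Dqq Dpq (fst p $ j) (snd p $ j))
    - GG2 R (PhiF \<omega> \<gamma> p) * (\<Sum>j\<in>UNIV. P3 \<omega> \<gamma> Dpp Dqq Dpq (fst p $ j) (snd p $ j))"

lemma QFP_phi: "R \<noteq> 0 \<Longrightarrow> QFP_adj \<omega> \<gamma> Dpp Dqq Dpq (phi \<omega> \<gamma> R S) p = Qf \<omega> \<gamma> Dpp Dqq Dpq R S p"
  unfolding phi_def Qf_def by (rule QFP_formula[OF GG_d1 GG_d2 KK_d1 KK_d2])

lemma Qf_cont: "continuous_on UNIV (Qf \<omega> \<gamma> Dpp Dqq Dpq R S :: 'n::finite ps \<Rightarrow> real)"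
  unfolding Qf_def[abs_def] GG_def GG1_def GG2_def KK_def KK1_def KK2_def P1_def P2_def P3_def P4_def P5_def divide_inverse
  by (intro continuous_intros)

lemma psiR_cont: "continuous_on UNIV (psiR \<omega> \<gamma> Dpp Dqq Dpq R :: 'n::finite ps \<Rightarrow> real)"
  unfolding psiR_def[abs_def] GG_def GG1_def GG2_def P1_def P3_def divide_inverse
  by (intro continuous_intros)

lemma phi_test:
  assumes R: "R > 0" and S: "S > 0"
  shows "test_fun (phi \<omega> \<gamma> R S :: 'n::finite ps \<Rightarrow> real)"
proof -
  have sf: "smooth_fam (Cls A0 :: (real \<Rightarrow> real) set)" by (rule smooth_fam_Cls[OF smooth_A0])
  have lin1: "bounded_linear (\<lambda>p::'n ps. (fst p, 0::real^'n))"
    by (intro bounded_linear_Pair bounded_linear_fst bounded_linear_zero)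
  have lin2: "bounded_linear (\<lambda>p::'n ps. ((2 * \<gamma>) *\<^sub>R fst p + snd p, 0::real^'n))"
    by (intro bounded_linear_Pair bounded_linear_add bounded_linear_zero bounded_linear_snd
        bounded_linear_compose[OF bounded_linear_scaleR_right bounded_linear_fst])
  have PhiC: "PhiF \<omega> \<gamma> \<in> (Cls (Cls A0 :: (real \<Rightarrow> real) set) :: ('n ps \<Rightarrow> real) set)"
  proof -
    have "(\<lambda>p. \<omega>\<^sup>2 * inner (fst p, 0::real^'n) (fst p, 0::real^'n)
        + inner ((2 * \<gamma>) *\<^sub>R fst p + snd p, 0::real^'n) ((2 * \<gamma>) *\<^sub>R fst p + snd p, 0::real^'n))
       \<in> (Cls (Cls A0 :: (real \<Rightarrow> real) set) :: ('n ps \<Rightarrow> real) set)"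
      by (rule Cls.add[OF Cls.mul[OF Cls.cst Cls.bil[OF lin1 lin1]] Cls.bil[OF lin2 lin2]])
    moreover have "(\<lambda>p::'n ps. \<omega>\<^sup>2 * inner (fst p, 0::real^'n) (fst p, 0::real^'n)
        + inner ((2 * \<gamma>) *\<^sub>R fst p + snd p, 0::real^'n) ((2 * \<gamma>) *\<^sub>R fst p + snd p, 0::real^'n)) = PhiF \<omega> \<gamma>"
      by (rule ext) (simp add: PhiF_def)
    ultimately show ?thesis by simp
  qed
  have PsiC: "PsiF \<in> (Cls (Cls A0 :: (real \<Rightarrow> real) set) :: ('n ps \<Rightarrow> real) set)"
  proof -
    have "(\<lambda>p::'n ps. inner p p) \<in> (Cls (Cls A0 :: (real \<Rightarrow> real) set) :: ('n ps \<Rightarrow> real) set)"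
      by (rule Cls.bil[OF bounded_linear_ident bounded_linear_ident])
    moreover have "(\<lambda>p::'n ps. inner p p) = PsiF" by (rule ext) (simp add: PsiF_def inner_prod_def)
    ultimately show ?thesis by simp
  qed
  have kC: "kk \<in> Cls A0" by (rule kk_Cls)
  have "(\<lambda>p::'n ps. (PhiF \<omega> \<gamma> p * kk (PhiF \<omega> \<gamma> p * inverse R)) * kk (PsiF p * inverse S))
      \<in> (Cls (Cls A0 :: (real \<Rightarrow> real) set) :: ('n ps \<Rightarrow> real) set)"
    by (rule Cls.mul[OF Cls.mul[OF PhiC Cls.cmp[OF kC Cls.mul[OF PhiC Cls.cst]]] Cls.cmp[OF kC Cls.mul[OF PsiC Cls.cst]]])
  moreover have "(\<lambda>p::'n ps. (PhiF \<omega> \<gamma> p * kk (PhiF \<omega> \<gamma> p * inverse R)) * kk (PsiF p * inverse S)) = phi \<omega> \<gamma> R S"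
    by (rule ext) (simp add: phi_def GG_def KK_def divide_inverse)
  ultimately have C: "phi \<omega> \<gamma> R S \<in> (Cls (Cls A0 :: (real \<Rightarrow> real) set) :: ('n ps \<Rightarrow> real) set)" by (simp only:)
  have sub: "{p::'n ps. phi \<omega> \<gamma> R S p \<noteq> 0} \<subseteq> cball 0 (sqrt (2 * S))"
  proof
    fix p :: "'n ps" assume "p \<in> {p. phi \<omega> \<gamma> R S p \<noteq> 0}"
    then have "kk (PsiF p / S) \<noteq> 0" by (auto simp: phi_def KK_def)
    then have "PsiF p / S < 2" using kk_0[of "PsiF p / S"] by linarith
    then have "PsiF p \<le> 2 * S" using S by (simp add: field_simps)
    moreover have "PsiF p = (norm p)\<^sup>2" by (simp add: PsiF_def power2_norm_eq_inner inner_prod_def)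
    ultimately have "(norm p)\<^sup>2 \<le> 2 * S" by simp
    then have "norm p \<le> sqrt (2 * S)" using real_le_rsqrt by blast
    then show "p \<in> cball 0 (sqrt (2 * S))" by simp
  qed
  have "compact (closure {p::'n ps. phi \<omega> \<gamma> R S p \<noteq> 0})"
    unfolding compact_eq_bounded_closed
    using bounded_subset[OF bounded_cball sub] by auto
  then show ?thesis unfolding test_fun_def using Cls_Cinf[OF sf C] by simp
qed

lemma Qf_eq_psiR:
  assumes S: "S > 0" and lt: "PsiF p < S"
  shows "Qf \<omega> \<gamma> Dpp Dqq Dpq R S p = psiR \<omega> \<gamma> Dpp Dqq Dpq R p"
proof -
  have v: "PsiF p / S < 1" using S lt by (simp add: field_simps)
  have "KK S (PsiF p) = 1" using kk_1[of "PsiF p / S"] v by (simp add: KK_def)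
  moreover have "KK1 S (PsiF p) = 0" "KK2 S (PsiF p) = 0" using kz[of "PsiF p / S"] v by (simp_all add: KK1_def KK2_def)
  ultimately show ?thesis by (simp add: Qf_def psiR_def)
qed

lemma psiR_eq:
  assumes R: "R > 0" and lt: "PhiF \<omega> \<gamma> p < R" and g: "\<gamma> * \<omega> = 0"
  shows "psiR \<omega> \<gamma> Dpp Dqq Dpq R (p :: 'n::finite ps) = - (real CARD('n) * (2 * Dpp + Dqq * (2 * \<omega>\<^sup>2 + 8 * \<gamma>\<^sup>2) + 8 * \<gamma> * Dpq))"
proof -
  have u: "PhiF \<omega> \<gamma> p / R < 1" using R lt by (simp add: field_simps)
  have "GG1 R (PhiF \<omega> \<gamma> p) = 1" "GG2 R (PhiF \<omega> \<gamma> p) = 0"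
    using kz[of "PhiF \<omega> \<gamma> p / R"] kk_1[of "PhiF \<omega> \<gamma> p / R"] u by (simp_all add: GG1_def GG2_def)
  then show ?thesis by (simp add: psiR_def P1_val[OF g] algebra_simps)
qed

lemma abs_mult_le2: "\<bar>a\<bar> \<le> A \<Longrightarrow> \<bar>b\<bar> \<le> B \<Longrightarrow> \<bar>a * b\<bar> \<le> A * (B::real)"
  by (simp add: abs_mult mult_mono' abs_ge_zero order.trans[OF abs_ge_zero] mult_mono)

lemma Qf_bound:
  fixes p :: "'n::finite ps"
  assumes R: "R \<ge> 1" and S: "S \<ge> 1" and g: "\<gamma> * \<omega> = 0"
    and pos: "Dpp \<ge> 0" "Dqq \<ge> 0" "Dpq \<ge> 0" "\<gamma> \<ge> 0"
  defines "c0 \<equiv> 2 * Dpp + Dqq * (2 * \<omega>\<^sup>2 + 8 * \<gamma>\<^sup>2) + 8 * \<gamma> * Dpq"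
    and "C2 \<equiv> \<bar>2 * \<omega>\<^sup>2 - 2\<bar> + \<bar>4 * \<gamma>\<bar>" and "E2 \<equiv> \<bar>2 * Dpp + 2 * Dqq\<bar>"
    and "C3 \<equiv> 4 * Dpp + 2 * Dpq + (Dqq + 2 * Dpq) * (8 * \<omega>\<^sup>2 + 32 * \<gamma>\<^sup>2)"
    and "C4 \<equiv> \<bar>Dqq * (4 * \<omega>\<^sup>2 + 16 * \<gamma>\<^sup>2) + 8 * \<gamma> * Dpq\<bar> + \<bar>8 * \<gamma> * Dpp + 8 * \<gamma> * Dqq + Dpq * (4 * \<omega>\<^sup>2 + 16 * \<gamma>\<^sup>2) + 4 * Dpq\<bar>
     + \<bar>4 * Dpp + 8 * \<gamma> * Dpq\<bar>"
    and "C5 \<equiv> \<bar>4 * Dqq\<bar> + \<bar>8 * Dpq\<bar> + \<bar>4 * Dpp\<bar>"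
  shows "\<bar>Qf \<omega> \<gamma> Dpp Dqq Dpq R S p\<bar> \<le> 3 * M * M * (real CARD('n) * c0) + 2 * M * R * (2 * M * C2 + real CARD('n) * E2 * M)
           + M * (8 * M * C3) + 2 * (3 * M) * (2 * M * C4) + 2 * M * R * (2 * M * C5)"
proof -
  define \<Phi> where "\<Phi> = PhiF \<omega> \<gamma> p"
  define \<Psi> where "\<Psi> = PsiF p"
  define u where "u = \<Phi> / R"
  define v where "v = \<Psi> / S"
  have R0: "R > 0" and S0: "S > 0" using R S by auto
  have u0: "u \<ge> 0" unfolding u_def \<Phi>_def using R0 PhiF_nonneg[of \<omega> \<gamma> p] by simp
  have v0: "v \<ge> 0" unfolding v_def \<Psi>_def using S0 PsiF_nonneg[of p] by simp
  have Phiu: "\<Phi> = R * u" and Psiv: "\<Psi> = S * v" using R0 S0 by (auto simp: u_def v_def)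
  define s1 where "s1 = (\<Sum>j\<in>UNIV. P1 \<omega> \<gamma> Dpp Dqq Dpq (fst p $ j) (snd p $ j))"
  define s2 where "s2 = (\<Sum>j\<in>UNIV. P2 \<omega> \<gamma> Dpp Dqq Dpq (fst p $ j) (snd p $ j))"
  define s3 where "s3 = (\<Sum>j\<in>UNIV. P3 \<omega> \<gamma> Dpp Dqq Dpq (fst p $ j) (snd p $ j))"
  define s4 where "s4 = (\<Sum>j\<in>UNIV. P4 \<omega> \<gamma> Dpp Dqq Dpq (fst p $ j) (snd p $ j))"
  define s5 where "s5 = (\<Sum>j\<in>UNIV. P5 \<omega> \<gamma> Dpp Dqq Dpq (fst p $ j) (snd p $ j))"
  have c0: "c0 \<ge> 0" using pos by (simp add: c0_def)
  have s1v: "s1 = - (real CARD('n) * c0)" by (simp add: s1_def P1_val[OF g] c0_def algebra_simps)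
  have s2b: "\<bar>s2\<bar> \<le> C2 * \<Psi> + real CARD('n) * E2"
    unfolding s2_def \<Psi>_def PsiF_sum C2_def E2_def by (rule sum_bound) (rule P2_bound)
  have s3b: "\<bar>s3\<bar> \<le> C3 * \<Phi>"
    using sum_bound[of "P3 \<omega> \<gamma> Dpp Dqq Dpq" C3 "\<lambda>x y. \<omega>\<^sup>2 * x\<^sup>2 + (2 * \<gamma> * x + y)\<^sup>2" 0 p] P3_bound[OF pos(1-3)]
    unfolding s3_def \<Phi>_def PhiF_sum C3_def by simp
  have s4b: "\<bar>s4\<bar> \<le> C4 * \<Psi>"
    using sum_bound[of "P4 \<omega> \<gamma> Dpp Dqq Dpq" C4 "\<lambda>x y. x\<^sup>2 + y\<^sup>2" 0 p] P4_bound
    unfolding s4_def \<Psi>_def PsiF_sum C4_def by simp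
  have s5b: "\<bar>s5\<bar> \<le> C5 * \<Psi>"
    using sum_bound[of "P5 \<omega> \<gamma> Dpp Dqq Dpq" C5 "\<lambda>x y. x\<^sup>2 + y\<^sup>2" 0 p] P5_bound
    unfolding s5_def \<Psi>_def PsiF_sum C5_def by simp
  have C2p: "C2 \<ge> 0" "E2 \<ge> 0" "C3 \<ge> 0" "C4 \<ge> 0" "C5 \<ge> 0"
    using pos by (auto simp: C2_def E2_def C3_def C4_def C5_def)
  note tb = tk_bounds[OF u0] tk_bounds[OF v0]
  have f1: "\<bar>GG1 R \<Phi>\<bar> \<le> 3 * M"
  proof -
    have "\<bar>GG1 R \<Phi>\<bar> \<le> \<bar>kk u\<bar> + \<bar>u * k1 u\<bar>" unfolding GG1_def u_def[symmetric] by (rule abs_triangle_ineq)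
    then show ?thesis using kb[of u] tb(2) by linarith
  qed
  have f2: "\<bar>GG R \<Phi>\<bar> \<le> 2 * M * R"
  proof -
    have "GG R \<Phi> = R * (u * kk u)" by (simp add: GG_def u_def[symmetric] Phiu)
    then show ?thesis using tb(1) R0 by (simp add: abs_mult)
  qed
  have f3: "\<bar>KK S \<Psi>\<bar> \<le> M" using kb[of v] by (simp add: KK_def v_def)
  have f5: "\<bar>KK1 S \<Psi> * s2\<bar> \<le> 2 * M * C2 + real CARD('n) * E2 * M"
  proof -
    define a where "a = \<bar>k1 v\<bar>"
    have a0: "a \<ge> 0" "a \<le> M" using kb[of v] by (auto simp: a_def)
    have av: "v * a \<le> 2 * M" using tb(6) v0 by (simp add: a_def abs_mult)
    have e1: "\<bar>KK1 S \<Psi> * s2\<bar> = (a / S) * \<bar>s2\<bar>"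
      using S0 by (simp add: KK1_def v_def a_def abs_mult)
    have "(a / S) * \<bar>s2\<bar> \<le> (a / S) * (C2 * (S * v) + real CARD('n) * E2)"
      using s2b Psiv S0 a0 by (intro mult_left_mono) auto
    also have "(a / S) * (C2 * (S * v) + real CARD('n) * E2) = C2 * (v * a) + real CARD('n) * E2 * (a / S)"
      using S0 by (simp add: field_simps)
    also have "\<dots> \<le> C2 * (2 * M) + real CARD('n) * E2 * M"
    proof (intro add_mono mult_left_mono)
      have "M * 1 \<le> M * S" using mult_left_mono[OF S, of M] M1 by simp
      then show "a / S \<le> M" using S a0 by (simp add: divide_le_eq)
    qed (use C2p av in auto)
    finally show ?thesis unfolding e1 by (simp add: algebra_simps)
  qed
  have f6: "\<bar>GG2 R \<Phi> * s3\<bar> \<le> 8 * M * C3"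
  proof -
    define b where "b = 2 * k1 u + u * k2 u"
    define bb where "bb = \<bar>b\<bar>"
    have bb0: "bb \<ge> 0" by (simp add: bb_def)
    have e: "GG2 R \<Phi> = b / R" by (simp add: GG2_def u_def b_def)
    have e1: "\<bar>GG2 R \<Phi> * s3\<bar> = (bb / R) * \<bar>s3\<bar>" using R0 by (simp add: e abs_mult bb_def)
    have "(bb / R) * \<bar>s3\<bar> \<le> (bb / R) * (C3 * (R * u))"
      using s3b Phiu R0 bb0 by (intro mult_left_mono) auto
    also have "(bb / R) * (C3 * (R * u)) = C3 * (u * bb)" using R0 by (simp add: field_simps)
    also have "u * bb = \<bar>u * b\<bar>" using u0 by (simp add: bb_def abs_mult)
    also have "u * b = 2 * (u * k1 u) + u * u * k2 u" by (simp add: b_def algebra_simps)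
    also have "C3 * \<bar>2 * (u * k1 u) + u * u * k2 u\<bar> \<le> C3 * (2 * (2 * M) + 4 * M)"
    proof (rule mult_left_mono)
      have "\<bar>2 * (u * k1 u) + u * u * k2 u\<bar> \<le> \<bar>2 * (u * k1 u)\<bar> + \<bar>u * u * k2 u\<bar>" by (rule abs_triangle_ineq)
      moreover have "\<bar>2 * (u * k1 u)\<bar> \<le> 2 * (2 * M)" using tb(2) by (simp add: abs_mult)
      ultimately show "\<bar>2 * (u * k1 u) + u * u * k2 u\<bar> \<le> 2 * (2 * M) + 4 * M" using tb(4) by linarith
    qed (use C2p in auto)
    finally show ?thesis unfolding e1 by (simp add: algebra_simps)
  qed
  have f7: "\<bar>KK1 S \<Psi> * s4\<bar> \<le> 2 * M * C4"
  proof -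
    define a where "a = \<bar>k1 v\<bar>"
    have a0: "a \<ge> 0" by (simp add: a_def)
    have av: "v * a \<le> 2 * M" using tb(6) v0 by (simp add: a_def abs_mult)
    have e1: "\<bar>KK1 S \<Psi> * s4\<bar> = (a / S) * \<bar>s4\<bar>" using S0 by (simp add: KK1_def v_def a_def abs_mult)
    have "(a / S) * \<bar>s4\<bar> \<le> (a / S) * (C4 * (S * v))"
      using s4b Psiv S0 a0 by (intro mult_left_mono) auto
    also have "(a / S) * (C4 * (S * v)) = C4 * (v * a)" using S0 by (simp add: field_simps)
    also have "\<dots> \<le> C4 * (2 * M)" using av C2p by (intro mult_left_mono) auto
    finally show ?thesis unfolding e1 by (simp add: algebra_simps)
  qed
  have f8: "\<bar>KK2 S \<Psi> * s5\<bar> \<le> 2 * M * C5"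
  proof -
    define a where "a = \<bar>k2 v\<bar>"
    have a0: "a \<ge> 0" by (simp add: a_def)
    have av: "v * a \<le> 2 * M" using tb(7) v0 by (simp add: a_def abs_mult)
    have va0: "v * a \<ge> 0" using v0 a0 by simp
    have e1: "\<bar>KK2 S \<Psi> * s5\<bar> = (a / S\<^sup>2) * \<bar>s5\<bar>" using S0 by (simp add: KK2_def v_def a_def abs_mult)
    have "(a / S\<^sup>2) * \<bar>s5\<bar> \<le> (a / S\<^sup>2) * (C5 * (S * v))"
      using s5b Psiv S0 a0 by (intro mult_left_mono) auto
    also have "(a / S\<^sup>2) * (C5 * (S * v)) = C5 * ((v * a) / S)" using S0 by (simp add: field_simps power2_eq_square)
    also have "\<dots> \<le> C5 * (2 * M)"
    proof (rule mult_left_mono)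
      have "(v * a) / S \<le> v * a" using S va0 by (simp add: divide_le_eq) (metis mult_left_mono mult_1_right)
      then show "(v * a) / S \<le> 2 * M" using av by linarith
    qed (use C2p in auto)
    finally show ?thesis unfolding e1 by (simp add: algebra_simps)
  qed
  have t1: "\<bar>GG1 R \<Phi> * KK S \<Psi> * s1\<bar> \<le> 3 * M * M * (real CARD('n) * c0)"
    by (rule abs_mult3_le[OF f1 f3]) (simp add: s1v c0)
  have t2: "\<bar>GG R \<Phi> * (KK1 S \<Psi> * s2)\<bar> \<le> 2 * M * R * (2 * M * C2 + real CARD('n) * E2 * M)"
    by (rule abs_mult_le2[OF f2 f5])
  have t3: "\<bar>KK S \<Psi> * (GG2 R \<Phi> * s3)\<bar> \<le> M * (8 * M * C3)"
    by (rule abs_mult_le2[OF f3 f6])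
  have t4: "\<bar>(2 * GG1 R \<Phi>) * (KK1 S \<Psi> * s4)\<bar> \<le> 2 * (3 * M) * (2 * M * C4)"
    by (rule abs_mult_le2[OF _ f7]) (use f1 in \<open>simp add: abs_mult\<close>)
  have t5: "\<bar>GG R \<Phi> * (KK2 S \<Psi> * s5)\<bar> \<le> 2 * M * R * (2 * M * C5)"
    by (rule abs_mult_le2[OF f2 f8])
  have Q: "Qf \<omega> \<gamma> Dpp Dqq Dpq R S p = GG1 R \<Phi> * KK S \<Psi> * s1 + GG R \<Phi> * (KK1 S \<Psi> * s2)
       - KK S \<Psi> * (GG2 R \<Phi> * s3) - (2 * GG1 R \<Phi>) * (KK1 S \<Psi> * s4) - GG R \<Phi> * (KK2 S \<Psi> * s5)"
    unfolding Qf_def \<Phi>_def[symmetric] \<Psi>_def[symmetric] s1_def[symmetric] s2_def[symmetric] s3_def[symmetric]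
      s4_def[symmetric] s5_def[symmetric] by (simp only: mult.assoc mult.commute mult.left_commute)
  show ?thesis unfolding Q using t1 t2 t3 t4 t5 unfolding abs_le_iff by linarith
qed

lemma psiR_bound:
  fixes p :: "'n::finite ps"
  assumes R: "R \<ge> 1" and g: "\<gamma> * \<omega> = 0"
    and pos: "Dpp \<ge> 0" "Dqq \<ge> 0" "Dpq \<ge> 0" "\<gamma> \<ge> 0"
  defines "c0 \<equiv> 2 * Dpp + Dqq * (2 * \<omega>\<^sup>2 + 8 * \<gamma>\<^sup>2) + 8 * \<gamma> * Dpq"
    and "C3 \<equiv> 4 * Dpp + 2 * Dpq + (Dqq + 2 * Dpq) * (8 * \<omega>\<^sup>2 + 32 * \<gamma>\<^sup>2)"
  shows "\<bar>psiR \<omega> \<gamma> Dpp Dqq Dpq R p\<bar> \<le> 3 * M * (real CARD('n) * c0) + 8 * M * C3"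
proof -
  define \<Phi> where "\<Phi> = PhiF \<omega> \<gamma> p"
  define u where "u = \<Phi> / R"
  have R0: "R > 0" using R by auto
  have u0: "u \<ge> 0" unfolding u_def \<Phi>_def using R0 PhiF_nonneg[of \<omega> \<gamma> p] by simp
  have Phiu: "\<Phi> = R * u" using R0 by (auto simp: u_def)
  define s1 where "s1 = (\<Sum>j\<in>UNIV. P1 \<omega> \<gamma> Dpp Dqq Dpq (fst p $ j) (snd p $ j))"
  define s3 where "s3 = (\<Sum>j\<in>UNIV. P3 \<omega> \<gamma> Dpp Dqq Dpq (fst p $ j) (snd p $ j))"
  have c0: "c0 \<ge> 0" using pos by (simp add: c0_def)
  have C3p: "C3 \<ge> 0" using pos by (simp add: C3_def)
  have s1v: "s1 = - (real CARD('n) * c0)" by (simp add: s1_def P1_val[OF g] c0_def algebra_simps)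
  have s3b: "\<bar>s3\<bar> \<le> C3 * \<Phi>"
    using sum_bound[of "P3 \<omega> \<gamma> Dpp Dqq Dpq" C3 "\<lambda>x y. \<omega>\<^sup>2 * x\<^sup>2 + (2 * \<gamma> * x + y)\<^sup>2" 0 p] P3_bound[OF pos(1-3)]
    unfolding s3_def \<Phi>_def PhiF_sum C3_def by simp
  note tb = tk_bounds[OF u0]
  have f1: "\<bar>GG1 R \<Phi>\<bar> \<le> 3 * M"
  proof -
    have "\<bar>GG1 R \<Phi>\<bar> \<le> \<bar>kk u\<bar> + \<bar>u * k1 u\<bar>" unfolding GG1_def u_def[symmetric] by (rule abs_triangle_ineq)
    then show ?thesis using kb[of u] tb(2) by linarith
  qed
  have f6: "\<bar>GG2 R \<Phi> * s3\<bar> \<le> 8 * M * C3"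
  proof -
    define b where "b = 2 * k1 u + u * k2 u"
    define bb where "bb = \<bar>b\<bar>"
    have bb0: "bb \<ge> 0" by (simp add: bb_def)
    have e: "GG2 R \<Phi> = b / R" by (simp add: GG2_def u_def b_def)
    have e1: "\<bar>GG2 R \<Phi> * s3\<bar> = (bb / R) * \<bar>s3\<bar>" using R0 by (simp add: e abs_mult bb_def)
    have "(bb / R) * \<bar>s3\<bar> \<le> (bb / R) * (C3 * (R * u))"
      using s3b Phiu R0 bb0 by (intro mult_left_mono) auto
    also have "(bb / R) * (C3 * (R * u)) = C3 * (u * bb)" using R0 by (simp add: field_simps)
    also have "u * bb = \<bar>u * b\<bar>" using u0 by (simp add: bb_def abs_mult)
    also have "u * b = 2 * (u * k1 u) + u * u * k2 u" by (simp add: b_def algebra_simps)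
    also have "C3 * \<bar>2 * (u * k1 u) + u * u * k2 u\<bar> \<le> C3 * (2 * (2 * M) + 4 * M)"
    proof (rule mult_left_mono)
      have "\<bar>2 * (u * k1 u) + u * u * k2 u\<bar> \<le> \<bar>2 * (u * k1 u)\<bar> + \<bar>u * u * k2 u\<bar>" by (rule abs_triangle_ineq)
      moreover have "\<bar>2 * (u * k1 u)\<bar> \<le> 2 * (2 * M)" using tb(2) by (simp add: abs_mult)
      ultimately show "\<bar>2 * (u * k1 u) + u * u * k2 u\<bar> \<le> 2 * (2 * M) + 4 * M" using tb(4) by linarith
    qed (use C3p in auto)
    finally show ?thesis unfolding e1 by (simp add: algebra_simps)
  qed
  have t1: "\<bar>GG1 R \<Phi> * s1\<bar> \<le> 3 * M * (real CARD('n) * c0)"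
    by (rule abs_mult_le2[OF f1]) (simp add: s1v c0)
  have Q: "psiR \<omega> \<gamma> Dpp Dqq Dpq R p = GG1 R \<Phi> * s1 - GG2 R \<Phi> * s3"
    unfolding psiR_def \<Phi>_def s1_def s3_def ..
  show ?thesis unfolding Q using t1 f6 unfolding abs_le_iff by linarith
qed

lemma part2_ctx:
  fixes w :: "'n::finite ps \<Rightarrow> real"
  assumes g: "\<gamma> * \<omega> = 0" and pos: "\<gamma> \<ge> 0" "Dpp > 0" "Dqq \<ge> 0" "Dpq \<ge> 0"
    and w: "integrable lebesgue w" and w1: "(\<integral>p. w p \<partial>lebesgue) = 1"
    and st: "stationary_QFP \<omega> \<gamma> Dpp Dqq Dpq w"
  shows False
proof -
  define c0 where "c0 = 2 * Dpp + Dqq * (2 * \<omega>\<^sup>2 + 8 * \<gamma>\<^sup>2) + 8 * \<gamma> * Dpq"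
  have c0p: "c0 > 0" using pos by (simp add: c0_def add_pos_nonneg)
  have step1: "(\<integral>p. w p * psiR \<omega> \<gamma> Dpp Dqq Dpq R p \<partial>lebesgue) = 0" if R: "R \<ge> 1" for R
  proof (rule DC_zero[OF w])
    let ?Q = "\<lambda>n. Qf \<omega> \<gamma> Dpp Dqq Dpq R (real (Suc n)) :: 'n ps \<Rightarrow> real"
    show "continuous_on UNIV (?Q n)" for n by (rule Qf_cont)
    show "continuous_on UNIV (psiR \<omega> \<gamma> Dpp Dqq Dpq R :: 'n ps \<Rightarrow> real)" by (rule psiR_cont)
    show "(\<integral>p. w p * ?Q n p \<partial>lebesgue) = 0" for n
    proof -
      have "test_fun (phi \<omega> \<gamma> R (real (Suc n)) :: 'n ps \<Rightarrow> real)" by (rule phi_test) (use R in auto)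
      then have "(\<integral>p. w p * QFP_adj \<omega> \<gamma> Dpp Dqq Dpq (phi \<omega> \<gamma> R (real (Suc n))) p \<partial>lebesgue) = 0"
        using st unfolding stationary_QFP_def by blast
      moreover have "QFP_adj \<omega> \<gamma> Dpp Dqq Dpq (phi \<omega> \<gamma> R (real (Suc n))) p = ?Q n p" for p
        by (rule QFP_phi) (use R in auto)
      ultimately show ?thesis by simp
    qed
    show "eventually (\<lambda>n. ?Q n p = psiR \<omega> \<gamma> Dpp Dqq Dpq R p) sequentially" for p
    proof -
      obtain N :: nat where N: "PsiF p < real N" using reals_Archimedean2 by blast
      show ?thesis unfolding eventually_sequentially
        by (rule exI[of _ N], intro allI impI Qf_eq_psiR) (use N in auto)
    qed
    show "\<bar>?Q n p\<bar> \<le> 3 * M * M * (real CARD('n) * c0) + 2 * M * R * (2 * M * (\<bar>2 * \<omega>\<^sup>2 - 2\<bar> + \<bar>4 * \<gamma>\<bar>) + real CARD('n) * \<bar>2 * Dpp + 2 * Dqq\<bar> * M)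
           + M * (8 * M * (4 * Dpp + 2 * Dpq + (Dqq + 2 * Dpq) * (8 * \<omega>\<^sup>2 + 32 * \<gamma>\<^sup>2)))
           + 2 * (3 * M) * (2 * M * (\<bar>Dqq * (4 * \<omega>\<^sup>2 + 16 * \<gamma>\<^sup>2) + 8 * \<gamma> * Dpq\<bar> + \<bar>8 * \<gamma> * Dpp + 8 * \<gamma> * Dqq + Dpq * (4 * \<omega>\<^sup>2 + 16 * \<gamma>\<^sup>2) + 4 * Dpq\<bar>
     + \<bar>4 * Dpp + 8 * \<gamma> * Dpq\<bar>)) + 2 * M * R * (2 * M * (\<bar>4 * Dqq\<bar> + \<bar>8 * Dpq\<bar> + \<bar>4 * Dpp\<bar>))" for n p
      unfolding c0_def by (rule Qf_bound) (use R g pos in auto)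
  qed
  have step2: "(\<integral>p. w p * (- (real CARD('n) * c0)) \<partial>lebesgue) = 0"
  proof (rule DC_zero[OF w])
    let ?Q = "\<lambda>n. psiR \<omega> \<gamma> Dpp Dqq Dpq (real (Suc n)) :: 'n ps \<Rightarrow> real"
    show "continuous_on UNIV (?Q n)" for n by (rule psiR_cont)
    show "continuous_on UNIV (\<lambda>p::'n ps. - (real CARD('n) * c0))" by (rule continuous_on_const)
    show "(\<integral>p. w p * ?Q n p \<partial>lebesgue) = 0" for n by (rule step1) simp
    show "eventually (\<lambda>n. ?Q n p = - (real CARD('n) * c0)) sequentially" for p
    proof -
      obtain N :: nat where N: "PhiF \<omega> \<gamma> p < real N" using reals_Archimedean2 by blast
      show ?thesis unfolding eventually_sequentially c0_def
        by (rule exI[of _ N], intro allI impI psiR_eq) (use N g in auto)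
    qed
    show "\<bar>?Q n p\<bar> \<le> 3 * M * (real CARD('n) * c0) + 8 * M * (4 * Dpp + 2 * Dpq + (Dqq + 2 * Dpq) * (8 * \<omega>\<^sup>2 + 32 * \<gamma>\<^sup>2))" for n p
      unfolding c0_def by (rule psiR_bound) (use g pos in auto)
  qed
  then have "- (real CARD('n) * c0) * (\<integral>p. w p \<partial>lebesgue) = 0"
    by (simp add: mult.commute)
  then have "real CARD('n) * c0 = 0" using w1 by simp
  then show False using c0p by simp
qed

end

theorem corollary3p2:
  fixes \<omega>0 \<gamma> Dpp Dqq Dpq :: real
  assumes "\<omega>0 \<ge> 0" "\<gamma> \<ge> 0" "Dpp > 0" "Dqq \<ge> 0" "Dpq \<ge> 0"
    and "Dpp * Dqq - Dpq\<^sup>2 \<ge> \<gamma>\<^sup>2 / 4"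
  shows "(\<gamma> > 0 \<and> \<omega>0 > 0 \<longrightarrow>
            (\<forall>x :: real^'n::finite.
               integrable lborel (\<lambda>\<xi>. w_inf \<omega>0 \<gamma> Dpp Dqq Dpq x \<xi> *\<^sub>R \<xi>
                                     - Dqq *\<^sub>R grad_x (w_inf \<omega>0 \<gamma> Dpp Dqq Dpq) x \<xi>)
               \<and> current Dqq (w_inf \<omega>0 \<gamma> Dpp Dqq Dpq) x = 0))
       \<and> (\<omega>0 = 0 \<or> \<gamma> = 0 \<longrightarrow>
            \<not> (\<exists>w :: (real^'n) \<times> (real^'n) \<Rightarrow> real.
                  integrable lebesgue w \<and> (\<integral>p. w p \<partial>lebesgue) = 1
                  \<and> stationary_QFP \<omega>0 \<gamma> Dpp Dqq Dpq w))"
proof (intro conjI impI)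
  assume h: "\<gamma> > 0 \<and> \<omega>0 > 0"
  show "\<forall>x :: real^'n. integrable lborel (\<lambda>\<xi>. w_inf \<omega>0 \<gamma> Dpp Dqq Dpq x \<xi> *\<^sub>R \<xi>
                                     - Dqq *\<^sub>R grad_x (w_inf \<omega>0 \<gamma> Dpp Dqq Dpq) x \<xi>)
               \<and> current Dqq (w_inf \<omega>0 \<gamma> Dpp Dqq Dpq) x = 0"
    using part1[of \<gamma> \<omega>0 Dpp Dqq Dpq] h assms by auto
next
  assume h: "\<omega>0 = 0 \<or> \<gamma> = 0"
  then have g: "\<gamma> * \<omega>0 = 0" by auto
  obtain k1 k2 M where kp: "\<forall>t. (kk has_real_derivative k1 t) (at t)" "\<forall>t. (k1 has_real_derivative k2 t) (at t)"
      "\<forall>t. t < 1 \<or> t > 2 \<longrightarrow> k1 t = 0 \<and> k2 t = 0" "M \<ge> 1"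
      "\<forall>t. \<bar>kk t\<bar> \<le> M \<and> \<bar>k1 t\<bar> \<le> M \<and> \<bar>k2 t\<bar> \<le> M" "\<forall>t. isCont k2 t"
    using kk_props by blast
  show "\<not> (\<exists>w :: (real^'n) \<times> (real^'n) \<Rightarrow> real.
                  integrable lebesgue w \<and> (\<integral>p. w p \<partial>lebesgue) = 1
                  \<and> stationary_QFP \<omega>0 \<gamma> Dpp Dqq Dpq w)"
  proof
    assume "\<exists>w :: (real^'n) \<times> (real^'n) \<Rightarrow> real.
                  integrable lebesgue w \<and> (\<integral>p. w p \<partial>lebesgue) = 1
                  \<and> stationary_QFP \<omega>0 \<gamma> Dpp Dqq Dpq w"
    then obtain w :: "(real^'n) \<times> (real^'n) \<Rightarrow> real" where w: "integrable lebesgue w" "(\<integral>p. w p \<partial>lebesgue) = 1"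
      "stationary_QFP \<omega>0 \<gamma> Dpp Dqq Dpq w" by blast
    have kz: "\<And>t. t < 1 \<or> t > 2 \<Longrightarrow> k1 t = 0 \<and> k2 t = 0" using kp(3) by blast
    show False
      by (rule part2_ctx[of k1 k2 M, OF kp(1)[rule_format] kp(2)[rule_format] kz kp(4) kp(5)[rule_format] kp(6)[rule_format]
            g assms(2) assms(3) assms(4) assms(5) w(1) w(2) w(3)])
  qed
qed

end
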